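(* Let $G$ be a finite group and $D\trianglelefteq G$, and suppose that the conjugation action of $G$ on the Burnside ring of $D$ factors through a quotient of $G$ of order $n$. (1) If $\Theta=\sum_in_iH_i$ is a $G$-relation with all $H_i\subseteq D$, then $n\Theta=\operatorname{Ind}_D^G\Theta'$ for some $D$-relation $\Theta'$. (2) Suppose moreover $N\trianglelefteq G$ with $N\subseteq D$, and every subgroup of $G$ either contains $N$ or is contained in $D$. Then for every $G$-relation $\Theta$, $n\Theta$ is the sum of a $G$-relation of the form $\operatorname{Ind}_D^G\Theta'$ with $\Theta'$ a $D$-relation and a $G$-relation of the form $\sum_jm_jU_j$ with $U_j\supseteq N$ and $\sum_jm_jU_j/N$ a $G/N$-relation.
   Context: The Burnside ring of a finite group $G$ is the free abelian group on the set of conjugacy classes of subgroups of $G$. A $G$-relation is an element $\Theta=\sum_in_iH_i$ of it with $\bigoplus_i\mathbb C[G/H_i]^{\oplus n_i}=0$ as virtual representation. For $D\le G$ and a $D$-relation $\Theta'$, $\operatorname{Ind}_D^G\Theta'$ denotes the same formal sum regarded as an element of the Burnside ring of $G$ (it is a $G$-relation). *)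

theory Defs
  imports "HOL-Algebra.Algebra"
begin

text \<open>An element of the Burnside ring of G is represented by a finitely supported
  integer-valued function c on subgroups of G, standing for the formal sum
  sum_H c(H) [H]; two such functions represent the same element iff their
  sums over every G-conjugacy class of subgroups agree.\<close>

definition burnside_elem :: "('a, 'b) monoid_scheme \<Rightarrow> ('a set \<Rightarrow> int) \<Rightarrow> bool" where
  "burnside_elem G c \<longleftrightarrow> finite {H. c H \<noteq> 0} \<and> (\<forall>H. c H \<noteq> 0 \<longrightarrow> subgroup H G)"

definition conj_sub :: "('a, 'b) monoid_scheme \<Rightarrow> 'a \<Rightarrow> 'a set \<Rightarrow> 'a set" where
  "conj_sub G g H = (\<lambda>h. g \<otimes>\<^bsub>G\<^esub> h \<otimes>\<^bsub>G\<^esub> inv\<^bsub>G\<^esub> g) ` H"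

definition conjugate_subgroups :: "('a, 'b) monoid_scheme \<Rightarrow> 'a set \<Rightarrow> 'a set \<Rightarrow> bool" where
  "conjugate_subgroups G K H \<longleftrightarrow> (\<exists>g\<in>carrier G. K = conj_sub G g H)"

definition burnside_eq :: "('a, 'b) monoid_scheme \<Rightarrow> ('a set \<Rightarrow> int) \<Rightarrow> ('a set \<Rightarrow> int) \<Rightarrow> bool" where
  "burnside_eq G c d \<longleftrightarrow> (\<forall>H. subgroup H G \<longrightarrow>
     (\<Sum>K\<in>{K. c K \<noteq> 0 \<and> conjugate_subgroups G K H}. c K) =
     (\<Sum>K\<in>{K. d K \<noteq> 0 \<and> conjugate_subgroups G K H}. d K))"

text \<open>Character of the permutation representation C[G/H] at g: the number of
  left cosets xH fixed by left multiplication by g.\<close>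
definition perm_char :: "('a, 'b) monoid_scheme \<Rightarrow> 'a set \<Rightarrow> 'a \<Rightarrow> nat" where
  "perm_char G H g = card {C. (\<exists>x\<in>carrier G. C = x <#\<^bsub>G\<^esub> H) \<and> g <#\<^bsub>G\<^esub> C = C}"

text \<open>G-relation: the virtual permutation representation is zero, i.e. its
  character vanishes identically.\<close>
definition is_relation :: "('a, 'b) monoid_scheme \<Rightarrow> ('a set \<Rightarrow> int) \<Rightarrow> bool" where
  "is_relation G c \<longleftrightarrow> burnside_elem G c \<and>
     (\<forall>g\<in>carrier G. (\<Sum>H\<in>{H. c H \<noteq> 0}. c H * int (perm_char G H g)) = 0)"

text \<open>Given a formal sum psi of subgroups U containing N, the formal sum
  sum psi(U) [U/N] of subgroups of G/N (G Mod N has carrier rcosets N).\<close>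
definition quot_sum :: "('a, 'b) monoid_scheme \<Rightarrow> 'a set \<Rightarrow> ('a set \<Rightarrow> int) \<Rightarrow> ('a set set \<Rightarrow> int)" where
  "quot_sum G N psi V = (\<Sum>U\<in>{U. psi U \<noteq> 0 \<and> (\<lambda>u. N #>\<^bsub>G\<^esub> u) ` U = V}. psi U)"

definition conj_action_factors :: "('a, 'b) monoid_scheme \<Rightarrow> 'a set \<Rightarrow> nat \<Rightarrow> bool" where
  "conj_action_factors G D n \<longleftrightarrow> (\<exists>K. K \<lhd> G \<and> order (G Mod K) = n \<and>
     (\<forall>k\<in>K. \<forall>H. subgroup H (G\<lparr>carrier := D\<rparr>) \<longrightarrow>
        conjugate_subgroups (G\<lparr>carrier := D\<rparr>) (conj_sub G k H) H))"

end

theory Submission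
  imports Defs
begin


definition cnt :: "('a,'b) monoid_scheme \<Rightarrow> 'a set \<Rightarrow> 'a \<Rightarrow> 'a set \<Rightarrow> nat" where
  "cnt G A g H = card {y\<in>A. inv\<^bsub>G\<^esub> y \<otimes>\<^bsub>G\<^esub> g \<otimes>\<^bsub>G\<^esub> y \<in> H}"

lemma (in group) lcos_eq_iff:
  assumes "subgroup H G" "a \<in> carrier G" "x \<in> carrier G"
  shows "(a <# H = x <# H) \<longleftrightarrow> inv x \<otimes> a \<in> H"
proof
  assume "a <# H = x <# H"
  then have "a \<in> x <# H" using lcos_self assms by metis
  then show "inv x \<otimes> a \<in> H" using subgroup.lcos_module_imp[OF assms(1) is_group assms(3)] by blast
next
  assume "inv x \<otimes> a \<in> H"
  then have "a \<in> x <# H" using subgroup.lcos_module_rev[OF assms(1) is_group assms(3) assms(2)] by blast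
  then show "a <# H = x <# H" using l_repr_independence assms by metis
qed

lemma (in group) perm_char_cnt:
  assumes fin: "finite (carrier G)" and H: "subgroup H G" and g: "g \<in> carrier G"
  shows "card H * perm_char G H g = cnt G (carrier G) g H"
proof -
  define F where "F = {C. (\<exists>x\<in>carrier G. C = x <# H) \<and> g <# C = C}"
  have HG: "H \<subseteq> carrier G" using H subgroup.subset by blast
  have key: "g <# (x <# H) = x <# H \<longleftrightarrow> inv x \<otimes> g \<otimes> x \<in> H" if x: "x \<in> carrier G" for x
  proof -
    have "g <# (x <# H) = (g \<otimes> x) <# H" using lcos_m_assoc HG g x by blast
    then show ?thesis using lcos_eq_iff[OF H, of "g \<otimes> x" x] x g by (simp add: m_assoc)
  qed
  have U: "\<Union>F = {y\<in>carrier G. inv y \<otimes> g \<otimes> y \<in> H}"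
  proof
    show "\<Union>F \<subseteq> {y\<in>carrier G. inv y \<otimes> g \<otimes> y \<in> H}"
    proof
      fix y assume "y \<in> \<Union>F"
      then obtain x where x: "x \<in> carrier G" "y \<in> x <# H" "g <# (x <# H) = x <# H"
        unfolding F_def by blast
      have yG: "y \<in> carrier G" using x l_coset_carrier H by blast
      have "x <# H = y <# H" using l_repr_independence x H by blast
      then show "y \<in> {y\<in>carrier G. inv y \<otimes> g \<otimes> y \<in> H}" using key[OF yG] x yG by simp
    qed
  next
    show "{y\<in>carrier G. inv y \<otimes> g \<otimes> y \<in> H} \<subseteq> \<Union>F"
    proof
      fix y assume y: "y \<in> {y\<in>carrier G. inv y \<otimes> g \<otimes> y \<in> H}"
      then have "y <# H \<in> F" unfolding F_def using key by blast
      moreover have "y \<in> y <# H" using lcos_self y H by blast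
      ultimately show "y \<in> \<Union>F" by blast
    qed
  qed
  have Fsub: "F \<subseteq> lcosets H" unfolding F_def LCOSETS_def by blast
  have finF: "finite F" using Fsub lcosets_subset_PowG[OF H] fin
    by (meson finite_Pow_iff finite_subset)
  have c1: "\<And>c. c\<in>F \<Longrightarrow> card c = card H"
    using Fsub l_card_cosets_equal[OF _ HG fin] by (metis subsetD)
  have c2: "\<And>c1 c2. c1\<in>F \<Longrightarrow> c2\<in>F \<Longrightarrow> c1 \<noteq> c2 \<Longrightarrow> c1 \<inter> c2 = {}"
    using Fsub lcos_disjoint[OF H] by blast
  have fU: "finite (\<Union>F)" using U fin by simp
  have "card H * card F = card (\<Union>F)"
    using card_partition[OF finF fU c1 c2] by simp
  then show ?thesis using U unfolding cnt_def perm_char_def F_def by simp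
qed


lemma card_filter_sum: "finite A \<Longrightarrow> card {y\<in>A. P y} = (\<Sum>y\<in>A. if P y then 1 else 0)"
  by (simp add: sum.inter_filter[symmetric])

lemma sum_bij_self: "bij_betw h A A \<Longrightarrow> (\<Sum>y\<in>A. f (h y)) = (\<Sum>y\<in>A. f y)"
  using sum.reindex_bij_betw by blast

context group begin

lemma grp_cancel1 [simp]: "x \<in> carrier G \<Longrightarrow> y \<in> carrier G \<Longrightarrow> inv x \<otimes> (x \<otimes> y) = y"
  by (simp add: m_assoc[symmetric])
lemma grp_cancel2 [simp]: "x \<in> carrier G \<Longrightarrow> y \<in> carrier G \<Longrightarrow> x \<otimes> (inv x \<otimes> y) = y"
  by (simp add: m_assoc[symmetric])

lemma conj_sub_mem:
  assumes "z \<in> carrier G" "g \<in> carrier G" "L \<subseteq> carrier G"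
  shows "z \<in> conj_sub G g L \<longleftrightarrow> inv g \<otimes> z \<otimes> g \<in> L"
proof
  assume "z \<in> conj_sub G g L"
  then obtain h where h: "h \<in> L" "z = g \<otimes> h \<otimes> inv g" unfolding conj_sub_def by blast
  have "h \<in> carrier G" using h assms by blast
  then have "inv g \<otimes> z \<otimes> g = h" using h assms by (simp add: m_assoc)
  then show "inv g \<otimes> z \<otimes> g \<in> L" using h by simp
next
  assume a: "inv g \<otimes> z \<otimes> g \<in> L"
  have "g \<otimes> (inv g \<otimes> z \<otimes> g) \<otimes> inv g = z" using assms by (simp add: m_assoc)
  then show "z \<in> conj_sub G g L" unfolding conj_sub_def using a by force
qed

lemma conj_sub_subset: "g \<in> carrier G \<Longrightarrow> L \<subseteq> carrier G \<Longrightarrow> conj_sub G g L \<subseteq> carrier G"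
  unfolding conj_sub_def by auto

lemma conj_sub_comp:
  assumes "g \<in> carrier G" "h \<in> carrier G" "L \<subseteq> carrier G"
  shows "conj_sub G g (conj_sub G h L) = conj_sub G (g \<otimes> h) L"
  unfolding conj_sub_def image_image using assms
  by (intro image_cong refl) (auto simp: m_assoc inv_mult_group subsetD)

lemma conj_sub_one: "L \<subseteq> carrier G \<Longrightarrow> conj_sub G \<one> L = L"
  unfolding conj_sub_def by (auto simp: subsetD)

lemma conj_sub_inv_cancel:
  assumes "g \<in> carrier G" "L \<subseteq> carrier G"
  shows "conj_sub G g (conj_sub G (inv g) L) = L" "conj_sub G (inv g) (conj_sub G g L) = L"
  using assms by (simp_all add: conj_sub_comp conj_sub_one)

lemma conj_sub_card:
  assumes "g \<in> carrier G" "L \<subseteq> carrier G"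
  shows "card (conj_sub G g L) = card L"
proof -
  have "inj_on (\<lambda>h. g \<otimes> h \<otimes> inv g) L"
    using assms by (auto simp: inj_on_def subsetD)
  then show ?thesis unfolding conj_sub_def by (simp add: card_image)
qed

lemma conj_sub_subgroup:
  assumes "subgroup L G" "g \<in> carrier G"
  shows "subgroup (conj_sub G g L) G"
proof (rule subgroupI)
  have LG: "L \<subseteq> carrier G" using assms subgroup.subset by blast
  show "conj_sub G g L \<subseteq> carrier G" using conj_sub_subset assms LG by blast
  show "conj_sub G g L \<noteq> {}" unfolding conj_sub_def using subgroup.one_closed[OF assms(1)] by blast
  fix a b assume a: "a \<in> conj_sub G g L" and b: "b \<in> conj_sub G g L"
  have aG: "a \<in> carrier G" and bG: "b \<in> carrier G" using a b conj_sub_subset assms LG by blast+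
  have a': "inv g \<otimes> a \<otimes> g \<in> L" and b': "inv g \<otimes> b \<otimes> g \<in> L"
    using a b conj_sub_mem aG bG assms LG by blast+
  have "inv g \<otimes> inv a \<otimes> g = inv (inv g \<otimes> a \<otimes> g)" using aG assms
    by (simp add: inv_mult_group m_assoc)
  then have "inv g \<otimes> inv a \<otimes> g \<in> L" using a' subgroup.m_inv_closed[OF assms(1)] by simp
  then show "inv a \<in> conj_sub G g L" using conj_sub_mem aG assms LG by simp
  have "inv g \<otimes> (a \<otimes> b) \<otimes> g = (inv g \<otimes> a \<otimes> g) \<otimes> (inv g \<otimes> b \<otimes> g)" using aG bG assms
    by (simp add: m_assoc)
  then have "inv g \<otimes> (a \<otimes> b) \<otimes> g \<in> L" using a' b' subgroup.m_closed[OF assms(1)] by simp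
  then show "a \<otimes> b \<in> conj_sub G g L" using conj_sub_mem aG bG assms LG by simp
qed

lemma cnt_sub:
  assumes "subgroup D G"
  shows "cnt (G\<lparr>carrier := D\<rparr>) D g H = cnt G D g H"
proof -
  have "{y\<in>D. inv\<^bsub>G\<lparr>carrier := D\<rparr>\<^esub> y \<otimes>\<^bsub>G\<lparr>carrier := D\<rparr>\<^esub> g \<otimes>\<^bsub>G\<lparr>carrier := D\<rparr>\<^esub> y \<in> H}
      = {y\<in>D. inv y \<otimes> g \<otimes> y \<in> H}" using assms by auto
  then show ?thesis unfolding cnt_def by simp
qed

lemma cnt_sum_conj:
  assumes fin: "finite (carrier G)" and D: "subgroup D G" and e: "e \<in> carrier G"
  shows "(\<Sum>g\<in>carrier G. cnt G D (inv g \<otimes> e \<otimes> g) L) = card D * cnt G (carrier G) e L"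
proof -
  have DG: "D \<subseteq> carrier G" using D subgroup.subset by blast
  have finD: "finite D" using fin DG finite_subset by blast
  have "(\<Sum>g\<in>carrier G. cnt G D (inv g \<otimes> e \<otimes> g) L)
     = (\<Sum>g\<in>carrier G. \<Sum>y\<in>D. if inv (g \<otimes> y) \<otimes> e \<otimes> (g \<otimes> y) \<in> L then 1 else 0)"
  proof (rule sum.cong[OF refl])
    fix g assume g: "g \<in> carrier G"
    have "cnt G D (inv g \<otimes> e \<otimes> g) L = (\<Sum>y\<in>D. if inv y \<otimes> (inv g \<otimes> e \<otimes> g) \<otimes> y \<in> L then 1 else 0)"
      unfolding cnt_def by (rule card_filter_sum[OF finD])
    also have "\<dots> = (\<Sum>y\<in>D. if inv (g \<otimes> y) \<otimes> e \<otimes> (g \<otimes> y) \<in> L then 1 else 0)"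
      using g e DG by (intro sum.cong refl) (auto simp: inv_mult_group m_assoc subsetD)
    finally show "cnt G D (inv g \<otimes> e \<otimes> g) L = \<dots>" .
  qed
  also have "\<dots> = (\<Sum>y\<in>D. \<Sum>g\<in>carrier G. if inv (g \<otimes> y) \<otimes> e \<otimes> (g \<otimes> y) \<in> L then 1 else 0)"
    by (rule sum.swap)
  also have "\<dots> = (\<Sum>y\<in>D. \<Sum>z\<in>carrier G. if inv z \<otimes> e \<otimes> z \<in> L then 1 else 0)"
  proof (rule sum.cong[OF refl])
    fix y assume y: "y \<in> D"
    then have yG: "y \<in> carrier G" using DG by blast
    have "bij_betw (\<lambda>g. g \<otimes> y) (carrier G) (carrier G)"
      by (rule bij_betwI[where g="\<lambda>z. z \<otimes> inv y"]) (auto simp: yG m_assoc)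
    then show "(\<Sum>g\<in>carrier G. if inv (g \<otimes> y) \<otimes> e \<otimes> (g \<otimes> y) \<in> L then 1 else 0)
        = (\<Sum>z\<in>carrier G. if inv z \<otimes> e \<otimes> z \<in> L then 1 else 0)"
      by (rule sum.reindex_bij_betw)
  qed
  also have "\<dots> = card D * cnt G (carrier G) e L"
    unfolding cnt_def using card_filter_sum[OF fin] by simp
  finally show ?thesis .
qed

lemma cnt_conj_normal:
  assumes fin: "finite (carrier G)" and D: "D \<lhd> G" and t: "t \<in> carrier G"
    and e: "e \<in> carrier G" and L: "L \<subseteq> carrier G"
  shows "cnt G D e (conj_sub G t L) = cnt G D (inv t \<otimes> e \<otimes> t) L"
proof -
  have DG: "D \<subseteq> carrier G" using D normal_imp_subgroup subgroup.subset by blast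
  have finD: "finite D" using fin DG finite_subset by blast
  have bij: "bij_betw (\<lambda>y. inv t \<otimes> y \<otimes> t) D D"
  proof (rule bij_betwI[where g="\<lambda>y. t \<otimes> y \<otimes> inv t"])
    show "(\<lambda>y. inv t \<otimes> y \<otimes> t) \<in> D \<rightarrow> D"
      using D t normal.inv_op_closed1 by fastforce
    show "(\<lambda>y. t \<otimes> y \<otimes> inv t) \<in> D \<rightarrow> D"
      using D t normal.inv_op_closed2 by fastforce
    show "\<And>x. x \<in> D \<Longrightarrow> t \<otimes> (inv t \<otimes> x \<otimes> t) \<otimes> inv t = x" using t DG by (auto simp: m_assoc subsetD)
    show "\<And>x. x \<in> D \<Longrightarrow> inv t \<otimes> (t \<otimes> x \<otimes> inv t) \<otimes> t = x" using t DG by (auto simp: m_assoc subsetD)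
  qed
  have "cnt G D e (conj_sub G t L) = (\<Sum>y\<in>D. if inv y \<otimes> e \<otimes> y \<in> conj_sub G t L then 1 else 0)"
    unfolding cnt_def by (rule card_filter_sum[OF finD])
  also have "\<dots> = (\<Sum>y\<in>D. if inv (inv t \<otimes> y \<otimes> t) \<otimes> (inv t \<otimes> e \<otimes> t) \<otimes> (inv t \<otimes> y \<otimes> t) \<in> L then 1 else 0)"
  proof (intro sum.cong refl)
    fix y assume "y \<in> D"
    then have y: "y \<in> carrier G" using DG by blast
    have "inv y \<otimes> e \<otimes> y \<in> conj_sub G t L \<longleftrightarrow> inv t \<otimes> (inv y \<otimes> e \<otimes> y) \<otimes> t \<in> L"
      using conj_sub_mem y e t L by simp
    moreover have "inv t \<otimes> (inv y \<otimes> e \<otimes> y) \<otimes> t = inv (inv t \<otimes> y \<otimes> t) \<otimes> (inv t \<otimes> e \<otimes> t) \<otimes> (inv t \<otimes> y \<otimes> t)"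
      using y e t by (simp add: inv_mult_group m_assoc)
    ultimately show "(if inv y \<otimes> e \<otimes> y \<in> conj_sub G t L then 1 else 0) = (if inv (inv t \<otimes> y \<otimes> t) \<otimes> (inv t \<otimes> e \<otimes> t) \<otimes> (inv t \<otimes> y \<otimes> t) \<in> L then 1 else (0::nat))"
      by simp
  qed
  also have "\<dots> = (\<Sum>y\<in>D. if inv y \<otimes> (inv t \<otimes> e \<otimes> t) \<otimes> y \<in> L then 1 else 0)"
    using sum_bij_self[OF bij, of "\<lambda>y. if inv y \<otimes> (inv t \<otimes> e \<otimes> t) \<otimes> y \<in> L then 1 else (0::nat)"] by simp
  also have "\<dots> = cnt G D (inv t \<otimes> e \<otimes> t) L"
    unfolding cnt_def using card_filter_sum[OF finD] by simp
  finally show ?thesis .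
qed

lemma cnt_conj_inner:
  assumes fin: "finite (carrier G)" and D: "subgroup D G" and d: "d \<in> D"
    and e: "e \<in> carrier G" and L: "L \<subseteq> carrier G"
  shows "cnt G D e (conj_sub G d L) = cnt G D e L"
proof -
  have DG: "D \<subseteq> carrier G" using D subgroup.subset by blast
  have finD: "finite D" using fin DG finite_subset by blast
  have dG: "d \<in> carrier G" using d DG by blast
  have bij: "bij_betw (\<lambda>y. y \<otimes> d) D D"
  proof (rule bij_betwI[where g="\<lambda>y. y \<otimes> inv d"])
    show "(\<lambda>y. y \<otimes> d) \<in> D \<rightarrow> D" using D d subgroup.m_closed by fastforce
    show "(\<lambda>y. y \<otimes> inv d) \<in> D \<rightarrow> D" using D d subgroup.m_closed subgroup.m_inv_closed by fastforce
    show "\<And>x. x \<in> D \<Longrightarrow> x \<otimes> d \<otimes> inv d = x" using dG DG by (auto simp: m_assoc subsetD)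
    show "\<And>x. x \<in> D \<Longrightarrow> x \<otimes> inv d \<otimes> d = x" using dG DG by (auto simp: m_assoc subsetD)
  qed
  have "cnt G D e (conj_sub G d L) = (\<Sum>y\<in>D. if inv y \<otimes> e \<otimes> y \<in> conj_sub G d L then 1 else 0)"
    unfolding cnt_def by (rule card_filter_sum[OF finD])
  also have "\<dots> = (\<Sum>y\<in>D. if inv (y \<otimes> d) \<otimes> e \<otimes> (y \<otimes> d) \<in> L then 1 else 0)"
  proof (intro sum.cong refl)
    fix y assume "y \<in> D"
    then have y: "y \<in> carrier G" using DG by blast
    have "inv y \<otimes> e \<otimes> y \<in> conj_sub G d L \<longleftrightarrow> inv d \<otimes> (inv y \<otimes> e \<otimes> y) \<otimes> d \<in> L"
      using conj_sub_mem y e dG L by simp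
    moreover have "inv d \<otimes> (inv y \<otimes> e \<otimes> y) \<otimes> d = inv (y \<otimes> d) \<otimes> e \<otimes> (y \<otimes> d)"
      using y e dG by (simp add: inv_mult_group m_assoc)
    ultimately show "(if inv y \<otimes> e \<otimes> y \<in> conj_sub G d L then 1 else 0) = (if inv (y \<otimes> d) \<otimes> e \<otimes> (y \<otimes> d) \<in> L then 1 else (0::nat))"
      by simp
  qed
  also have "\<dots> = (\<Sum>y\<in>D. if inv y \<otimes> e \<otimes> y \<in> L then 1 else 0)"
    using sum_bij_self[OF bij, of "\<lambda>y. if inv y \<otimes> e \<otimes> y \<in> L then 1 else (0::nat)"] by simp
  also have "\<dots> = cnt G D e L"
    unfolding cnt_def using card_filter_sum[OF finD] by simp
  finally show ?thesis .
qed

end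

lemma char_real:
  assumes grp: "group G" and fin: "finite (carrier G)"
    and sub: "\<And>H. c H \<noteq> 0 \<Longrightarrow> subgroup H G" and A: "finite A" "{H. c H \<noteq> 0} \<subseteq> A"
    and g: "g \<in> carrier G"
  shows "real_of_int (\<Sum>H\<in>{H. c H \<noteq> 0}. c H * int (perm_char G H g))
       = (\<Sum>H\<in>A. real_of_int (c H) / real (card H) * real (cnt G (carrier G) g H))"
proof -
  have "real_of_int (\<Sum>H\<in>{H. c H \<noteq> 0}. c H * int (perm_char G H g))
      = (\<Sum>H\<in>{H. c H \<noteq> 0}. real_of_int (c H) / real (card H) * real (cnt G (carrier G) g H))"
  proof (simp only: of_int_sum, intro sum.cong refl)
    fix H assume "H \<in> {H. c H \<noteq> 0}"
    then have H: "subgroup H G" using sub by blast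
    have "finite H" using fin subgroup.subset[OF H] finite_subset by blast
    moreover have "H \<noteq> {}" using subgroup.one_closed[OF H] by blast
    ultimately have cH: "card H > 0" by (simp add: card_gt_0_iff)
    have "card H * perm_char G H g = cnt G (carrier G) g H"
      using group.perm_char_cnt[OF grp fin H g] .
    then have "real (cnt G (carrier G) g H) = real (card H) * real (perm_char G H g)"
      by (metis of_nat_mult)
    then show "real_of_int (c H * int (perm_char G H g)) = real_of_int (c H) / real (card H) * real (cnt G (carrier G) g H)"
      using cH by simp
  qed
  also have "\<dots> = (\<Sum>H\<in>A. real_of_int (c H) / real (card H) * real (cnt G (carrier G) g H))"
    by (rule sum.mono_neutral_left[OF A(1) A(2)]) auto
  finally show ?thesis .
qed


definition rep :: "'a set \<Rightarrow> 'a" where "rep C = (SOME y. y \<in> C)"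

lemma sum_supp_eq:
  assumes "finite {L. P L}"
  shows "(\<Sum>L\<in>{L. f L \<noteq> 0 \<and> P L}. f L) = (\<Sum>L\<in>{L. P L}. (f L :: 'z::comm_monoid_add))"
  by (rule sum.mono_neutral_left[OF assms]) auto

context group begin

lemma rep_rcos:
  assumes K: "subgroup K G" and C: "C \<in> rcosets K"
  shows "rep C \<in> C" "rep C \<in> carrier G" "C = K #> rep C"
proof -
  obtain a where a: "a \<in> carrier G" "C = K #> a" using C unfolding RCOSETS_def by blast
  have "a \<in> C" using a rcos_self K by blast
  then show r: "rep C \<in> C" unfolding rep_def by (rule someI)
  then show "rep C \<in> carrier G" using a subgroup.elemrcos_carrier[OF K is_group] by blast
  show "C = K #> rep C" using repr_independence[OF _ a(1) K] r a by blast
qed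

lemma sum_rcosets:
  fixes f :: "'a \<Rightarrow> 'z::comm_semiring_1"
  assumes fin: "finite (carrier G)" and K: "subgroup K G"
    and inv: "\<And>k g. k \<in> K \<Longrightarrow> g \<in> carrier G \<Longrightarrow> f (k \<otimes> g) = f g"
  shows "(\<Sum>g\<in>carrier G. f g) = of_nat (card K) * (\<Sum>C\<in>rcosets K. f (rep C))"
proof -
  have KG: "K \<subseteq> carrier G" using K subgroup.subset by blast
  have fins: "\<forall>A\<in>rcosets K. finite A" using cosets_finite[OF _ KG fin] by blast
  have disj: "\<forall>A\<in>rcosets K. \<forall>B\<in>rcosets K. A \<noteq> B \<longrightarrow> A \<inter> B = {}"
    using rcos_disjoint[OF K] unfolding pairwise_def disjnt_def by blast
  have "(\<Sum>g\<in>carrier G. f g) = (\<Sum>g\<in>\<Union>(rcosets K). f g)" using rcosets_part_G[OF K] by simp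
  also have "\<dots> = (\<Sum>C\<in>rcosets K. \<Sum>g\<in>C. f g)"
    using sum.Union_disjoint[OF fins disj] by simp
  also have "\<dots> = (\<Sum>C\<in>rcosets K. of_nat (card K) * f (rep C))"
  proof (rule sum.cong[OF refl])
    fix C assume C: "C \<in> rcosets K"
    have "(\<Sum>g\<in>C. f g) = (\<Sum>g\<in>C. f (rep C))"
    proof (rule sum.cong[OF refl])
      fix g assume "g \<in> C"
      then have "g \<in> K #> rep C" using rep_rcos[OF K C] by simp
      then obtain k where "k \<in> K" "g = k \<otimes> rep C" unfolding r_coset_def by blast
      then show "f g = f (rep C)" using inv rep_rcos[OF K C] by simp
    qed
    also have "\<dots> = of_nat (card C) * f (rep C)" by simp
    also have "card C = card K" using card_rcosets_equal[OF C KG] by simp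
    finally show "(\<Sum>g\<in>C. f g) = of_nat (card K) * f (rep C)" .
  qed
  also have "\<dots> = of_nat (card K) * (\<Sum>C\<in>rcosets K. f (rep C))" by (simp add: sum_distrib_left)
  finally show ?thesis .
qed

lemma conj_class_finite:
  "finite (carrier G) \<Longrightarrow> finite {L. conjugate_subgroups G L H}"
proof -
  assume "finite (carrier G)"
  moreover have "{L. conjugate_subgroups G L H} = (\<lambda>g. conj_sub G g H) ` carrier G"
    unfolding conjugate_subgroups_def by blast
  ultimately show ?thesis by simp
qed

lemma conj_class_bij:
  assumes H: "subgroup H G" and g: "g \<in> carrier G"
  shows "bij_betw (conj_sub G g) {L. conjugate_subgroups G L H} {L. conjugate_subgroups G L H}"
proof -
  have HG: "H \<subseteq> carrier G" using H subgroup.subset by blast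
  have cl: "conjugate_subgroups G (conj_sub G x L) H"
    if x: "x \<in> carrier G" and L: "conjugate_subgroups G L H" for x L
  proof -
    obtain h where h: "h \<in> carrier G" "L = conj_sub G h H" using L unfolding conjugate_subgroups_def by blast
    then have "conj_sub G x L = conj_sub G (x \<otimes> h) H" using conj_sub_comp x HG by simp
    then show ?thesis unfolding conjugate_subgroups_def using x h by blast
  qed
  have sub: "L \<subseteq> carrier G" if L: "conjugate_subgroups G L H" for L
    using L conj_sub_subset HG unfolding conjugate_subgroups_def by blast
  show ?thesis
    by (rule bij_betwI[where g="conj_sub G (inv g)"])
       (use cl sub g in \<open>auto simp: conj_sub_inv_cancel\<close>)
qed

end

lemma part1:
  fixes G :: "('a, 'b) monoid_scheme" (structure)
  assumes grp: "group G" and fin: "finite (carrier G)" and D: "D \<lhd> G" and K: "K \<lhd> G"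
    and triv: "\<forall>k\<in>K. \<forall>H. subgroup H (G\<lparr>carrier := D\<rparr>) \<longrightarrow>
        conjugate_subgroups (G\<lparr>carrier := D\<rparr>) (conj_sub G k H) H"
    and rel: "is_relation G c" and inD: "\<forall>H. c H \<noteq> 0 \<longrightarrow> H \<subseteq> D"
  shows "\<exists>c'. is_relation (G\<lparr>carrier := D\<rparr>) c' \<and>
                  burnside_eq G (\<lambda>H. int (card (rcosets\<^bsub>G\<^esub> K)) * c H) c'"
proof -
  interpret group G by fact
  have Dsub: "subgroup D G" using D normal_imp_subgroup by blast
  have Ksub: "subgroup K G" using K normal_imp_subgroup by blast
  have DG: "D \<subseteq> carrier G" using Dsub subgroup.subset by blast
  have grpD: "group (G\<lparr>carrier := D\<rparr>)" using subgroup_imp_group[OF Dsub] .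
  have finD: "finite D" using fin DG finite_subset by blast
  define P where "P = Pow (carrier G)"
  have finP: "finite P" unfolding P_def using fin by simp
  have csub: "\<And>H. c H \<noteq> 0 \<Longrightarrow> subgroup H G" using rel unfolding is_relation_def burnside_elem_def by blast
  have csuppP: "{H. c H \<noteq> 0} \<subseteq> P" unfolding P_def using csub subgroup.subset by blast
  have czero: "\<And>g. g \<in> carrier G \<Longrightarrow> (\<Sum>H\<in>{H. c H \<noteq> 0}. c H * int (perm_char G H g)) = 0"
    using rel unfolding is_relation_def by blast
  define R where "R = rcosets K"
  have repR: "\<And>C. C \<in> R \<Longrightarrow> rep C \<in> carrier G" using rep_rcos[OF Ksub] unfolding R_def by blast
  define c' where "c' H = (if H \<subseteq> carrier G then (\<Sum>C\<in>R. c (conj_sub G (inv (rep C)) H)) else 0)" for H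
  have c'sub: "subgroup H G \<and> H \<subseteq> D" if "c' H \<noteq> 0" for H
  proof -
    from that have HG: "H \<subseteq> carrier G" and "(\<Sum>C\<in>R. c (conj_sub G (inv (rep C)) H)) \<noteq> 0"
      unfolding c'_def by (auto split: if_splits)
    then obtain C where C: "C \<in> R" "c (conj_sub G (inv (rep C)) H) \<noteq> 0" by (meson sum.neutral)
    define r where "r = rep C"
    have r: "r \<in> carrier G" using repR C r_def by blast
    define L where "L = conj_sub G (inv r) H"
    have L: "subgroup L G" "L \<subseteq> D" using csub inD C unfolding L_def r_def by blast+
    have "H = conj_sub G r L" unfolding L_def using conj_sub_inv_cancel r HG by simp
    moreover have "subgroup (conj_sub G r L) G" using conj_sub_subgroup L r by blast
    moreover have "conj_sub G r L \<subseteq> D"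
      unfolding conj_sub_def using L(2) r normal.inv_op_closed2[OF D] by blast
    ultimately show ?thesis by simp
  qed
  have c'suppP: "{H. c' H \<noteq> 0} \<subseteq> P" unfolding P_def using c'_def by auto
  have c'subD: "\<And>H. c' H \<noteq> 0 \<Longrightarrow> subgroup H (G\<lparr>carrier := D\<rparr>)"
    using c'sub subgroup_incl Dsub by blast
  have be: "burnside_elem (G\<lparr>carrier := D\<rparr>) c'"
    unfolding burnside_elem_def using c'subD c'suppP finP finite_subset by blast
  define chD where "chD e = (\<Sum>L\<in>P. real_of_int (c L) / real (card L) * real (cnt G D e L))" for e
  have bijP: "bij_betw (conj_sub G r) P P" if r: "r \<in> carrier G" for r
    by (rule bij_betwI[where g="conj_sub G (inv r)"])
       (use r in \<open>auto simp: P_def conj_sub_inv_cancel dest: conj_sub_subset[rotated]\<close>)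
  have conjD: "conj_sub (G\<lparr>carrier := D\<rparr>) g L = conj_sub G g L" if "g \<in> D" for g L
    unfolding conj_sub_def using that m_inv_consistent[OF Dsub] by simp
  have inv_chD: "chD (inv k \<otimes> e \<otimes> k) = chD e" if k: "k \<in> K" and e: "e \<in> D" for k e
    unfolding chD_def
  proof (rule sum.cong[OF refl])
    fix L assume L: "L \<in> P"
    have kG: "k \<in> carrier G" using k Ksub subgroup.subset by blast
    have eG: "e \<in> carrier G" using e DG by blast
    show "real_of_int (c L) / real (card L) * real (cnt G D (inv k \<otimes> e \<otimes> k) L)
        = real_of_int (c L) / real (card L) * real (cnt G D e L)"
    proof (cases "c L = 0")
      case False
      then have Ls: "subgroup L G" "L \<subseteq> D" using csub inD by blast+
      have LGD: "subgroup L (G\<lparr>carrier := D\<rparr>)" using subgroup_incl[OF Ls(1) Dsub Ls(2)] .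
      obtain d0 where d0: "d0 \<in> D" "conj_sub G k L = conj_sub G d0 L"
        using triv k LGD conjD unfolding conjugate_subgroups_def by fastforce
      have "cnt G D (inv k \<otimes> e \<otimes> k) L = cnt G D e (conj_sub G k L)"
        using cnt_conj_normal[OF fin D kG eG] L P_def by simp
      also have "\<dots> = cnt G D e L" using d0 cnt_conj_inner[OF fin Dsub d0(1) eG] L P_def by simp
      finally show ?thesis by simp
    qed simp
  qed
  have Dchar: "(\<Sum>H\<in>{H. c' H \<noteq> 0}. c' H * int (perm_char (G\<lparr>carrier := D\<rparr>) H d)) = 0"
    if d: "d \<in> D" for d
  proof -
    have dG: "d \<in> carrier G" using d DG by blast
    have "real_of_int (\<Sum>H\<in>{H. c' H \<noteq> 0}. c' H * int (perm_char (G\<lparr>carrier := D\<rparr>) H d))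
        = (\<Sum>H\<in>P. real_of_int (c' H) / real (card H) * real (cnt G D d H))"
      using char_real[OF grpD, of c' P d] finD c'subD finP c'suppP d cnt_sub[OF Dsub] by simp
    also have "\<dots> = (\<Sum>H\<in>P. \<Sum>C\<in>R. real_of_int (c (conj_sub G (inv (rep C)) H)) / real (card H) * real (cnt G D d H))"
      by (intro sum.cong refl) (simp add: c'_def P_def sum_divide_distrib sum_distrib_right)
    also have "\<dots> = (\<Sum>C\<in>R. \<Sum>H\<in>P. real_of_int (c (conj_sub G (inv (rep C)) H)) / real (card H) * real (cnt G D d H))"
      by (rule sum.swap)
    also have "\<dots> = (\<Sum>C\<in>R. chD (inv (rep C) \<otimes> d \<otimes> rep C))"
    proof (rule sum.cong[OF refl])
      fix C assume C: "C \<in> R"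
      define r where "r = rep C"
      have r: "r \<in> carrier G" using repR C r_def by blast
      have "(\<Sum>H\<in>P. real_of_int (c (conj_sub G (inv r) H)) / real (card H) * real (cnt G D d H))
          = (\<Sum>L\<in>P. real_of_int (c (conj_sub G (inv r) (conj_sub G r L))) / real (card (conj_sub G r L)) * real (cnt G D d (conj_sub G r L)))"
        using sum.reindex_bij_betw[OF bijP[OF r], of "\<lambda>H. real_of_int (c (conj_sub G (inv r) H)) / real (card H) * real (cnt G D d H)"]
        by simp
      also have "\<dots> = chD (inv r \<otimes> d \<otimes> r)"
        unfolding chD_def
        by (intro sum.cong refl) (simp add: P_def r conj_sub_inv_cancel conj_sub_card cnt_conj_normal[OF fin D r dG])
      finally show "(\<Sum>H\<in>P. real_of_int (c (conj_sub G (inv (rep C)) H)) / real (card H) * real (cnt G D d H))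
          = chD (inv (rep C) \<otimes> d \<otimes> rep C)" unfolding r_def .
    qed
    also have "\<dots> = 0"
    proof -
      define f where "f g = chD (inv g \<otimes> d \<otimes> g)" for g
      have finv: "f (k \<otimes> g) = f g" if k: "k \<in> K" and g: "g \<in> carrier G" for k g
      proof -
        have kG: "k \<in> carrier G" using k Ksub subgroup.subset by blast
        define k' where "k' = inv g \<otimes> k \<otimes> g"
        define e where "e = inv g \<otimes> d \<otimes> g"
        have k': "k' \<in> K" unfolding k'_def using normal.inv_op_closed1[OF K g k] .
        have e: "e \<in> D" unfolding e_def using normal.inv_op_closed1[OF D g d] .
        have "inv (k \<otimes> g) \<otimes> d \<otimes> (k \<otimes> g) = inv k' \<otimes> e \<otimes> k'"
          unfolding k'_def e_def using kG g dG by (simp add: inv_mult_group m_assoc)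
        then show ?thesis unfolding f_def using inv_chD[OF k' e] e_def by simp
      qed
      have "(\<Sum>g\<in>carrier G. f g) = real (card K) * (\<Sum>C\<in>R. f (rep C))"
        using sum_rcosets[OF fin Ksub, of f] finv unfolding R_def by simp
      moreover have "(\<Sum>g\<in>carrier G. f g) = 0"
      proof -
        have "(\<Sum>g\<in>carrier G. f g) = (\<Sum>L\<in>P. real_of_int (c L) / real (card L) * (\<Sum>g\<in>carrier G. real (cnt G D (inv g \<otimes> d \<otimes> g) L)))"
          unfolding f_def chD_def by (subst sum.swap) (simp add: sum_distrib_left)
        also have "\<dots> = real (card D) * (\<Sum>L\<in>P. real_of_int (c L) / real (card L) * real (cnt G (carrier G) d L))"
        proof -
          have "\<And>L. (\<Sum>g\<in>carrier G. real (cnt G D (inv g \<otimes> d \<otimes> g) L)) = real (card D) * real (cnt G (carrier G) d L)"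
            using cnt_sum_conj[OF fin Dsub dG] by (metis of_nat_mult of_nat_sum)
          then show ?thesis by (simp add: sum_distrib_left mult.left_commute)
        qed
        also have "\<dots> = 0"
          using char_real[OF grp fin, of c P d] csub finP csuppP dG czero[OF dG] by simp
        finally show ?thesis .
      qed
      moreover have "card K > 0"
        using Ksub fin subgroup.subset subgroup.one_closed finite_subset by (metis card_gt_0_iff empty_iff)
      ultimately show ?thesis unfolding f_def by simp
    qed
    finally show ?thesis by linarith
  qed
  have relD: "is_relation (G\<lparr>carrier := D\<rparr>) c'"
    unfolding is_relation_def using be Dchar by simp
  have beq: "burnside_eq G (\<lambda>H. int (card R) * c H) c'"
    unfolding burnside_eq_def
  proof (intro allI impI)
    fix H assume H: "subgroup H G"
    have HG: "H \<subseteq> carrier G" using H subgroup.subset by blast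
    let ?Cl = "{L. conjugate_subgroups G L H}"
    have finCl: "finite ?Cl" using conj_class_finite[OF fin] .
    have ClG: "L \<subseteq> carrier G" if "L \<in> ?Cl" for L
      using that conj_sub_subset HG unfolding conjugate_subgroups_def by blast
    have "(\<Sum>K\<in>{K. c' K \<noteq> 0 \<and> conjugate_subgroups G K H}. c' K) = (\<Sum>L\<in>?Cl. c' L)"
      using sum_supp_eq[OF finCl] .
    also have "\<dots> = (\<Sum>L\<in>?Cl. \<Sum>C\<in>R. c (conj_sub G (inv (rep C)) L))"
      by (intro sum.cong refl) (use ClG in \<open>simp add: c'_def\<close>)
    also have "\<dots> = (\<Sum>C\<in>R. \<Sum>L\<in>?Cl. c (conj_sub G (inv (rep C)) L))" by (rule sum.swap)
    also have "\<dots> = (\<Sum>C\<in>R. \<Sum>L\<in>?Cl. c L)"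
    proof (rule sum.cong[OF refl])
      fix C assume "C \<in> R"
      then have "inv (rep C) \<in> carrier G" using repR by blast
      then show "(\<Sum>L\<in>?Cl. c (conj_sub G (inv (rep C)) L)) = (\<Sum>L\<in>?Cl. c L)"
        using sum.reindex_bij_betw[OF conj_class_bij[OF H], of "inv (rep C)" c] by blast
    qed
    also have "\<dots> = int (card R) * (\<Sum>L\<in>?Cl. c L)" by simp
    also have "\<dots> = (\<Sum>L\<in>?Cl. int (card R) * c L)" by (simp add: sum_distrib_left)
    also have "\<dots> = (\<Sum>K\<in>{K. int (card R) * c K \<noteq> 0 \<and> conjugate_subgroups G K H}. int (card R) * c K)"
      using sum_supp_eq[OF finCl, of "\<lambda>L. int (card R) * c L"] by simp
    finally show "(\<Sum>K\<in>{K. int (card R) * c K \<noteq> 0 \<and> conjugate_subgroups G K H}. int (card R) * c K)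
        = (\<Sum>K\<in>{K. c' K \<noteq> 0 \<and> conjugate_subgroups G K H}. c' K)" by simp
  qed
  show ?thesis using relD beq unfolding R_def by blast
qed

lemma ind_rel:
  fixes G :: "('a, 'b) monoid_scheme" (structure)
  assumes grp: "group G" and fin: "finite (carrier G)" and D: "D \<lhd> G"
    and rel: "is_relation (G\<lparr>carrier := D\<rparr>) c"
  shows "is_relation G c"
proof -
  interpret group G by fact
  have Dsub: "subgroup D G" using D normal_imp_subgroup by blast
  have DG: "D \<subseteq> carrier G" using Dsub subgroup.subset by blast
  have grpD: "group (G\<lparr>carrier := D\<rparr>)" using subgroup_imp_group[OF Dsub] .
  have finD: "finite D" using fin DG finite_subset by blast
  define P where "P = Pow (carrier G)"
  have finP: "finite P" unfolding P_def using fin by simp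
  have csubD: "\<And>H. c H \<noteq> 0 \<Longrightarrow> subgroup H (G\<lparr>carrier := D\<rparr>)"
    using rel unfolding is_relation_def burnside_elem_def by blast
  have csub: "\<And>H. c H \<noteq> 0 \<Longrightarrow> subgroup H G" using csubD incl_subgroup[OF Dsub] by blast
  have cD: "\<And>H. c H \<noteq> 0 \<Longrightarrow> H \<subseteq> D" using csubD subgroup.subset by force
  have csuppP: "{H. c H \<noteq> 0} \<subseteq> P" unfolding P_def using csub subgroup.subset by blast
  have be: "burnside_elem G c"
    using rel csub unfolding is_relation_def burnside_elem_def by blast
  have Dz: "(\<Sum>H\<in>P. real_of_int (c H) / real (card H) * real (cnt G D e H)) = 0" if e: "e \<in> D" for e
  proof -
    have "real_of_int (\<Sum>H\<in>{H. c H \<noteq> 0}. c H * int (perm_char (G\<lparr>carrier := D\<rparr>) H e))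
        = (\<Sum>H\<in>P. real_of_int (c H) / real (card H) * real (cnt G D e H))"
      using char_real[OF grpD, of c P e] finD csubD finP csuppP e cnt_sub[OF Dsub] by simp
    moreover have "(\<Sum>H\<in>{H. c H \<noteq> 0}. c H * int (perm_char (G\<lparr>carrier := D\<rparr>) H e)) = 0"
      using rel e unfolding is_relation_def by simp
    ultimately show ?thesis by simp
  qed
  have Gz: "(\<Sum>H\<in>{H. c H \<noteq> 0}. c H * int (perm_char G H g)) = 0" if g: "g \<in> carrier G" for g
  proof -
    have eq: "real_of_int (\<Sum>H\<in>{H. c H \<noteq> 0}. c H * int (perm_char G H g))
        = (\<Sum>H\<in>P. real_of_int (c H) / real (card H) * real (cnt G (carrier G) g H))"
      using char_real[OF grp fin, of c P g] csub finP csuppP g by simp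
    show ?thesis
    proof (cases "g \<in> D")
      case True
      have "real (card D) * (\<Sum>H\<in>P. real_of_int (c H) / real (card H) * real (cnt G (carrier G) g H))
          = (\<Sum>H\<in>P. real_of_int (c H) / real (card H) * (\<Sum>y\<in>carrier G. real (cnt G D (inv y \<otimes> g \<otimes> y) H)))"
      proof -
        have "\<And>L. (\<Sum>y\<in>carrier G. real (cnt G D (inv y \<otimes> g \<otimes> y) L)) = real (card D) * real (cnt G (carrier G) g L)"
          using cnt_sum_conj[OF fin Dsub g] by (metis of_nat_mult of_nat_sum)
        then show ?thesis by (simp add: sum_distrib_left mult.left_commute)
      qed
      also have "\<dots> = (\<Sum>y\<in>carrier G. \<Sum>H\<in>P. real_of_int (c H) / real (card H) * real (cnt G D (inv y \<otimes> g \<otimes> y) H))"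
        by (subst sum.swap) (simp add: sum_distrib_left)
      also have "\<dots> = 0"
        using Dz normal.inv_op_closed1[OF D _ True] by (intro sum.neutral) blast
      finally have "(\<Sum>H\<in>P. real_of_int (c H) / real (card H) * real (cnt G (carrier G) g H)) = 0"
        using finD True by (auto simp: card_gt_0_iff)
      then show ?thesis using eq by (metis of_int_eq_0_iff)
    next
      case False
      have "(\<Sum>H\<in>P. real_of_int (c H) / real (card H) * real (cnt G (carrier G) g H)) = 0"
      proof (rule sum.neutral, rule ballI)
        fix H assume "H \<in> P"
        show "real_of_int (c H) / real (card H) * real (cnt G (carrier G) g H) = 0"
        proof (cases "c H = 0")
          case False': False
          have "{y \<in> carrier G. inv y \<otimes> g \<otimes> y \<in> H} = {}"
          proof (rule ccontr)
            assume "{y \<in> carrier G. inv y \<otimes> g \<otimes> y \<in> H} \<noteq> {}"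
            then obtain y where y: "y \<in> carrier G" "inv y \<otimes> g \<otimes> y \<in> D" using cD[OF False'] by blast
            then have "inv (inv y) \<otimes> (inv y \<otimes> g \<otimes> y) \<otimes> inv y \<in> D"
              using normal.inv_op_closed1[OF D, of "inv y"] by simp
            then have "g \<in> D" using y g by (simp add: m_assoc)
            then show False using \<open>g \<notin> D\<close> by blast
          qed
          then have "cnt G (carrier G) g H = 0" unfolding cnt_def by (metis card.empty)
          then show ?thesis by simp
        qed simp
      qed
      then show ?thesis using eq by (metis of_int_eq_0_iff)
    qed
  qed
  show ?thesis unfolding is_relation_def using be Gz by blast
qed




context group begin

lemma setmult_normal_subgroup:
  assumes N: "N \<lhd> G" and H: "subgroup H G"
  shows "subgroup (H <#> N) G"
proof -
  have "subgroup (N <#> H) G"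
    using second_isomorphism_grp.normal_set_mult_subgroup[of N G H] N H
    unfolding second_isomorphism_grp_def second_isomorphism_grp_axioms_def by blast
  then show ?thesis using commut_normal[OF H N] by simp
qed

lemma setmult_contains_N:
  assumes N: "N \<lhd> G" and H: "subgroup H G"
  shows "N \<subseteq> H <#> N"
proof
  fix n assume n: "n \<in> N"
  then have "n = \<one> \<otimes> n" using N normal_imp_subgroup subgroup.mem_carrier by (metis l_one)
  then show "n \<in> H <#> N" unfolding set_mult_def using n subgroup.one_closed[OF H] by blast
qed

lemma setmult_absorb:
  assumes N: "N \<lhd> G" and H: "subgroup H G" and NH: "N \<subseteq> H"
  shows "H <#> N = H"
proof
  show "H <#> N \<subseteq> H" using mono_set_mult[of H H N H G] NH subgroup_mult_id[OF H] by simp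
  show "H \<subseteq> H <#> N"
  proof
    fix h assume h: "h \<in> H"
    have "h = h \<otimes> \<one>" using h H subgroup.mem_carrier by (metis r_one)
    then show "h \<in> H <#> N" unfolding set_mult_def using h subgroup.one_closed[OF normal_imp_subgroup[OF N]] by blast
  qed
qed

lemma setmult_memE: "z \<in> H <#> N \<Longrightarrow> \<exists>h\<in>H. \<exists>n\<in>N. z = h \<otimes> n"
  unfolding set_mult_def by blast

lemma count_mult_in:
  assumes N: "N \<lhd> G" and H: "subgroup H G" and z: "z \<in> carrier G"
  shows "card {m\<in>N. z \<otimes> m \<in> H} = (if z \<in> H <#> N then card (H \<inter> N) else 0)"
proof (cases "z \<in> H <#> N")
  case True
  have Ns: "subgroup N G" using N normal_imp_subgroup by blast
  obtain h n0 where hn: "h \<in> H" "n0 \<in> N" "z = h \<otimes> n0"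
    using setmult_memE[OF True] by blast
  have hG: "h \<in> carrier G" by (rule subgroup.mem_carrier[OF H hn(1)])
  have n0G: "n0 \<in> carrier G" by (rule subgroup.mem_carrier[OF Ns hn(2)])
  have S: "{m\<in>N. z \<otimes> m \<in> H} = (\<lambda>a. inv n0 \<otimes> a) ` (H \<inter> N)"
  proof (intro equalityI subsetI)
    fix m assume m: "m \<in> {m\<in>N. z \<otimes> m \<in> H}"
    have mG: "m \<in> carrier G" using m subgroup.mem_carrier[OF Ns] by blast
    have e1: "n0 \<otimes> m = inv h \<otimes> (z \<otimes> m)" unfolding hn(3) using hG n0G mG by (simp add: m_assoc)
    have "inv h \<otimes> (z \<otimes> m) \<in> H" using m hn(1) subgroup.m_closed[OF H] subgroup.m_inv_closed[OF H] by blast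
    then have a1: "n0 \<otimes> m \<in> H" by (simp only: e1)
    have a2: "n0 \<otimes> m \<in> N" using m hn(2) subgroup.m_closed[OF Ns] by blast
    have a3: "m = inv n0 \<otimes> (n0 \<otimes> m)" using n0G mG by simp
    have "n0 \<otimes> m \<in> H \<inter> N" using a1 a2 by (rule IntI)
    then show "m \<in> (\<lambda>a. inv n0 \<otimes> a) ` (H \<inter> N)" by (rule image_eqI[where f="\<lambda>a. inv n0 \<otimes> a", OF a3])
  next
    fix m assume "m \<in> (\<lambda>a. inv n0 \<otimes> a) ` (H \<inter> N)"
    then obtain a where a: "a \<in> H" "a \<in> N" "m = inv n0 \<otimes> a" by (auto simp del: grp_cancel1 grp_cancel2)
    have aG: "a \<in> carrier G" by (rule subgroup.mem_carrier[OF H a(1)])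
    have b1: "m \<in> N" unfolding a(3) using a(2) hn(2) subgroup.m_closed[OF Ns] subgroup.m_inv_closed[OF Ns] by blast
    have e2: "z \<otimes> m = h \<otimes> a" unfolding a(3) hn(3) using hG n0G aG by (simp add: m_assoc)
    have "h \<otimes> a \<in> H" using a(1) hn(1) subgroup.m_closed[OF H] by blast
    then have "z \<otimes> m \<in> H" by (simp only: e2)
    then show "m \<in> {m\<in>N. z \<otimes> m \<in> H}" using b1 by blast
  qed
  have I: "inj_on (\<lambda>a. inv n0 \<otimes> a) (H \<inter> N)"
  proof (rule inj_onI)
    fix x y assume xy: "x \<in> H \<inter> N" "y \<in> H \<inter> N" and eq: "inv n0 \<otimes> x = inv n0 \<otimes> y"
    have xG: "x \<in> carrier G" "y \<in> carrier G" using xy subgroup.mem_carrier[OF H] by blast+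
    from eq have "n0 \<otimes> (inv n0 \<otimes> x) = n0 \<otimes> (inv n0 \<otimes> y)" by simp
    then show "x = y" using n0G xG by simp
  qed
  show ?thesis unfolding S using True card_image[OF I] by simp
next
  case False
  have Ns: "subgroup N G" using N normal_imp_subgroup by blast
  have "{m\<in>N. z \<otimes> m \<in> H} = {}"
  proof (rule ccontr)
    assume "{m\<in>N. z \<otimes> m \<in> H} \<noteq> {}"
    then obtain m where m: "m \<in> N" "z \<otimes> m \<in> H" by blast
    have mG: "m \<in> carrier G" using m subgroup.mem_carrier[OF Ns] by blast
    have e: "z = (z \<otimes> m) \<otimes> inv m" using z mG by (simp add: m_assoc)
    have "inv m \<in> N" using m subgroup.m_inv_closed[OF Ns] by blast
    then have "(z \<otimes> m) \<otimes> inv m \<in> H <#> N" unfolding set_mult_def using m(2) by (intro UN_I) (auto simp del: grp_cancel1 grp_cancel2)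
    then have "z \<in> H <#> N" by (simp only: e[symmetric])
    then show False using False by blast
  qed
  then show ?thesis using False by (simp only: card.empty if_False)
qed

lemma card_setmult:
  assumes fin: "finite (carrier G)" and N: "N \<lhd> G" and H: "subgroup H G"
  shows "card (H <#> N) * card (H \<inter> N) = card H * card N"
proof -
  have Ns: "subgroup N G" using N normal_imp_subgroup by blast
  have NG: "N \<subseteq> carrier G" and HG: "H \<subseteq> carrier G" using Ns H subgroup.subset by blast+
  have finN: "finite N" using fin NG finite_subset by blast
  have HNG: "H <#> N \<subseteq> carrier G" using setmult_subset_G HG NG by blast
  have "(\<Sum>z\<in>carrier G. card {m\<in>N. z \<otimes> m \<in> H}) = (\<Sum>z\<in>carrier G. if z \<in> H <#> N then card (H \<inter> N) else 0)"
    using count_mult_in[OF N H] by simp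
  also have "\<dots> = card (H <#> N) * card (H \<inter> N)"
    using sum.inter_restrict[OF fin, of "\<lambda>_. card (H \<inter> N)" "H <#> N"] HNG
    by (simp add: Int_absorb1)
  finally have A: "(\<Sum>z\<in>carrier G. card {m\<in>N. z \<otimes> m \<in> H}) = card (H <#> N) * card (H \<inter> N)" .
  have "(\<Sum>z\<in>carrier G. card {m\<in>N. z \<otimes> m \<in> H}) = (\<Sum>z\<in>carrier G. \<Sum>m\<in>N. if z \<otimes> m \<in> H then 1 else 0)"
    using card_filter_sum[OF finN] by simp
  also have "\<dots> = (\<Sum>m\<in>N. \<Sum>z\<in>carrier G. if z \<otimes> m \<in> H then 1 else 0)" by (rule sum.swap)
  also have "\<dots> = (\<Sum>m\<in>N. \<Sum>z\<in>carrier G. if z \<in> H then 1 else 0)"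
  proof (rule sum.cong[OF refl])
    fix m assume "m \<in> N"
    then have mG: "m \<in> carrier G" using NG by blast
    have "bij_betw (\<lambda>z. z \<otimes> m) (carrier G) (carrier G)"
      by (rule bij_betwI[where g="\<lambda>z. z \<otimes> inv m"]) (auto simp: mG m_assoc)
    then show "(\<Sum>z\<in>carrier G. if z \<otimes> m \<in> H then 1 else 0) = (\<Sum>z\<in>carrier G. if z \<in> H then 1 else (0::nat))"
      by (rule sum.reindex_bij_betw)
  qed
  also have "\<dots> = card N * card H"
  proof -
    have "{z \<in> carrier G. z \<in> H} = H" using HG by blast
    then show ?thesis using card_filter_sum[OF fin, of "\<lambda>z. z \<in> H"] by simp
  qed
  finally show ?thesis using A by simp
qed

lemma cnt_setmult:
  assumes fin: "finite (carrier G)" and N: "N \<lhd> G" and H: "subgroup H G" and g: "g \<in> carrier G"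
  shows "card (H \<inter> N) * cnt G (carrier G) g (H <#> N) = (\<Sum>m\<in>N. cnt G (carrier G) (g \<otimes> m) H)"
proof -
  have Ns: "subgroup N G" using N normal_imp_subgroup by blast
  have NG: "N \<subseteq> carrier G" using Ns subgroup.subset by blast
  have finN: "finite N" using fin NG finite_subset by blast
  have "(\<Sum>m\<in>N. cnt G (carrier G) (g \<otimes> m) H) = (\<Sum>m\<in>N. \<Sum>y\<in>carrier G. if inv y \<otimes> (g \<otimes> m) \<otimes> y \<in> H then 1 else 0)"
    unfolding cnt_def using card_filter_sum[OF fin] by simp
  also have "\<dots> = (\<Sum>y\<in>carrier G. \<Sum>m\<in>N. if (inv y \<otimes> g \<otimes> y) \<otimes> (inv y \<otimes> m \<otimes> y) \<in> H then 1 else 0)"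
    apply (subst sum.swap)
    apply (intro sum.cong refl)
    using g NG by (auto simp: m_assoc subsetD)
  also have "\<dots> = (\<Sum>y\<in>carrier G. \<Sum>m\<in>N. if (inv y \<otimes> g \<otimes> y) \<otimes> m \<in> H then 1 else 0)"
  proof (rule sum.cong[OF refl])
    fix y assume y: "y \<in> carrier G"
    have bij: "bij_betw (\<lambda>m. inv y \<otimes> m \<otimes> y) N N"
    proof (rule bij_betwI[where g="\<lambda>m. y \<otimes> m \<otimes> inv y"])
      show "(\<lambda>m. inv y \<otimes> m \<otimes> y) \<in> N \<rightarrow> N" using N y normal.inv_op_closed1 by fastforce
      show "(\<lambda>m. y \<otimes> m \<otimes> inv y) \<in> N \<rightarrow> N" using N y normal.inv_op_closed2 by fastforce
      show "\<And>x. x \<in> N \<Longrightarrow> y \<otimes> (inv y \<otimes> x \<otimes> y) \<otimes> inv y = x" using y NG by (auto simp: m_assoc subsetD)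
      show "\<And>x. x \<in> N \<Longrightarrow> inv y \<otimes> (y \<otimes> x \<otimes> inv y) \<otimes> y = x" using y NG by (auto simp: m_assoc subsetD)
    qed
    show "(\<Sum>m\<in>N. if (inv y \<otimes> g \<otimes> y) \<otimes> (inv y \<otimes> m \<otimes> y) \<in> H then 1 else 0)
        = (\<Sum>m\<in>N. if (inv y \<otimes> g \<otimes> y) \<otimes> m \<in> H then 1 else (0::nat))"
      by (rule sum_bij_self[OF bij])
  qed
  also have "\<dots> = (\<Sum>y\<in>carrier G. if inv y \<otimes> g \<otimes> y \<in> H <#> N then card (H \<inter> N) else 0)"
  proof (rule sum.cong[OF refl])
    fix y assume y: "y \<in> carrier G"
    have z: "inv y \<otimes> g \<otimes> y \<in> carrier G" using y g by simp
    show "(\<Sum>m\<in>N. if (inv y \<otimes> g \<otimes> y) \<otimes> m \<in> H then 1 else 0) = (if inv y \<otimes> g \<otimes> y \<in> H <#> N then card (H \<inter> N) else 0)"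
      using count_mult_in[OF N H z] card_filter_sum[OF finN, of "\<lambda>m. (inv y \<otimes> g \<otimes> y) \<otimes> m \<in> H"] by simp
  qed
  also have "\<dots> = card (H \<inter> N) * cnt G (carrier G) g (H <#> N)"
  proof -
    have "(\<Sum>y\<in>carrier G. if inv y \<otimes> g \<otimes> y \<in> H <#> N then card (H \<inter> N) else 0)
        = (\<Sum>y\<in>carrier G. card (H \<inter> N) * (if inv y \<otimes> g \<otimes> y \<in> H <#> N then 1 else 0))"
      by (intro sum.cong refl) simp
    also have "\<dots> = card (H \<inter> N) * (\<Sum>y\<in>carrier G. if inv y \<otimes> g \<otimes> y \<in> H <#> N then 1 else 0)"
      by (simp add: sum_distrib_left)
    finally show ?thesis
      unfolding cnt_def using card_filter_sum[OF fin, of "\<lambda>y. inv y \<otimes> g \<otimes> y \<in> H <#> N"] by simp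
  qed
  finally show ?thesis by simp
qed


lemma rcos_mem_img:
  assumes N: "N \<lhd> G" and U: "subgroup U G" and NU: "N \<subseteq> U" and z: "z \<in> carrier G"
  shows "N #> z \<in> (\<lambda>u. N #> u) ` U \<longleftrightarrow> z \<in> U"
proof
  assume "N #> z \<in> (\<lambda>u. N #> u) ` U"
  then obtain u where u: "u \<in> U" "N #> z = N #> u" by blast
  have Ns: "subgroup N G" using N normal_imp_subgroup by blast
  have uG: "u \<in> carrier G" by (rule subgroup.mem_carrier[OF U u(1)])
  have "z \<in> N #> u" using repr_independenceD[OF Ns z u(2)[symmetric]] .
  then obtain n where n: "n \<in> N" "z = n \<otimes> u" unfolding r_coset_def by blast
  have "n \<otimes> u \<in> U" using subgroup.m_closed[OF U] n NU u by blast
  then show "z \<in> U" using n by simp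
qed blast

lemma FactGroup_conj:
  assumes N: "N \<lhd> G" and y: "y \<in> carrier G" and g: "g \<in> carrier G"
  shows "inv\<^bsub>G Mod N\<^esub> (N #> y) \<otimes>\<^bsub>G Mod N\<^esub> (N #> g) \<otimes>\<^bsub>G Mod N\<^esub> (N #> y) = N #> (inv y \<otimes> g \<otimes> y)"
proof -
  interpret NN: normal N G by fact
  have "N #> y \<in> carrier (G Mod N)" using y unfolding FactGroup_def RCOSETS_def by auto
  then have "inv\<^bsub>G Mod N\<^esub> (N #> y) = N #> inv y" using NN.inv_FactGroup NN.rcos_inv y by simp
  then show ?thesis using y g by (simp add: NN.rcos_sum)
qed

lemma sum_rcosets_img:
  fixes F :: "'a set \<Rightarrow> 'z::comm_semiring_1"
  assumes fin: "finite (carrier G)" and N: "N \<lhd> G"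
  shows "(\<Sum>y\<in>carrier G. F (N #> y)) = of_nat (card N) * (\<Sum>C\<in>rcosets N. F C)"
proof -
  have Ns: "subgroup N G" using N normal_imp_subgroup by blast
  have NG: "N \<subseteq> carrier G" using Ns subgroup.subset by blast
  have "(\<Sum>y\<in>carrier G. F (N #> y)) = of_nat (card N) * (\<Sum>C\<in>rcosets N. F (N #> rep C))"
  proof (rule sum_rcosets[OF fin Ns])
    fix k g assume k: "k \<in> N" and g: "g \<in> carrier G"
    have kG: "k \<in> carrier G" by (rule subgroup.mem_carrier[OF Ns k])
    have "N #> (k \<otimes> g) = (N #> k) #> g" using coset_mult_assoc[OF NG kG g] by simp
    also have "N #> k = N" using subgroup.rcos_const[OF Ns is_group k] .
    finally show "F (N #> (k \<otimes> g)) = F (N #> g)" by simp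
  qed
  also have "(\<Sum>C\<in>rcosets N. F (N #> rep C)) = (\<Sum>C\<in>rcosets N. F C)"
    using rep_rcos(3)[OF Ns] by (intro sum.cong refl) (metis)
  finally show ?thesis .
qed

lemma img_subgroup:
  assumes N: "N \<lhd> G" and U: "subgroup U G" and NU: "N \<subseteq> U"
  shows "subgroup ((\<lambda>u. N #> u) ` U) (G Mod N)"
proof -
  interpret NN: normal N G by fact
  interpret Q: group "G Mod N" by (rule NN.factorgroup_is_group)
  have UG: "U \<subseteq> carrier G" using U subgroup.subset by blast
  show ?thesis
  proof (rule Q.subgroupI)
    show "(\<lambda>u. N #> u) ` U \<subseteq> carrier (G Mod N)" using UG unfolding FactGroup_def RCOSETS_def by auto
    show "(\<lambda>u. N #> u) ` U \<noteq> {}" using subgroup.one_closed[OF U] by blast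
  next
    fix A assume "A \<in> (\<lambda>u. N #> u) ` U"
    then obtain u where u: "u \<in> U" "A = N #> u" by blast
    have uG: "u \<in> carrier G" using u UG by blast
    have "A \<in> carrier (G Mod N)" using u uG unfolding FactGroup_def RCOSETS_def by auto
    then have "inv\<^bsub>G Mod N\<^esub> A = N #> inv u" using NN.inv_FactGroup NN.rcos_inv uG u by simp
    then show "inv\<^bsub>G Mod N\<^esub> A \<in> (\<lambda>u. N #> u) ` U" using subgroup.m_inv_closed[OF U u(1)] by simp
  next
    fix A B assume "A \<in> (\<lambda>u. N #> u) ` U" "B \<in> (\<lambda>u. N #> u) ` U"
    then obtain a b where ab: "a \<in> U" "A = N #> a" "b \<in> U" "B = N #> b" by blast
    have "A \<otimes>\<^bsub>G Mod N\<^esub> B = N #> (a \<otimes> b)" using ab UG NN.rcos_sum by auto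
    then show "A \<otimes>\<^bsub>G Mod N\<^esub> B \<in> (\<lambda>u. N #> u) ` U" using subgroup.m_closed[OF U ab(1,3)] by simp
  qed
qed

lemma card_img:
  assumes fin: "finite (carrier G)" and N: "N \<lhd> G" and U: "subgroup U G" and NU: "N \<subseteq> U"
  shows "card U = card N * card ((\<lambda>u. N #> u) ` U)"
proof -
  have Ns: "subgroup N G" using N normal_imp_subgroup by blast
  have UG: "U \<subseteq> carrier G" using U subgroup.subset by blast
  have NG: "N \<subseteq> carrier G" using Ns subgroup.subset by blast
  let ?I = "(\<lambda>u. N #> u) ` U"
  have sub: "?I \<subseteq> rcosets N" using UG unfolding RCOSETS_def by auto
  have un: "\<Union>?I = U"
  proof
    show "\<Union>?I \<subseteq> U"
    proof
      fix x assume "x \<in> \<Union>?I"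
      then obtain u where u: "u \<in> U" "x \<in> N #> u" by blast
      then obtain n where n: "n \<in> N" "x = n \<otimes> u" unfolding r_coset_def by blast
      have "n \<otimes> u \<in> U" using subgroup.m_closed[OF U] NU u(1) n(1) by blast
      then show "x \<in> U" by (simp only: n(2))
    qed
    show "U \<subseteq> \<Union>?I" using rcos_self[OF _ Ns] UG by blast
  qed
  have finU: "finite U" by (rule finite_subset[OF UG fin])
  have finI: "finite ?I" by (rule finite_imageI[OF finU])
  have c1: "\<And>c. c \<in> ?I \<Longrightarrow> card c = card N" using card_rcosets_equal[OF _ NG] sub by (metis subsetD)
  have c2: "\<And>c1 c2. c1 \<in> ?I \<Longrightarrow> c2 \<in> ?I \<Longrightarrow> c1 \<noteq> c2 \<Longrightarrow> c1 \<inter> c2 = {}"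
    using rcos_disjoint[OF Ns] sub unfolding pairwise_def disjnt_def by blast
  have fU: "finite (\<Union>?I)" by (simp only: un finU)
  show ?thesis using card_partition[OF finI fU c1 c2] un by simp
qed

lemma perm_char_quot:
  assumes fin: "finite (carrier G)" and N: "N \<lhd> G" and U: "subgroup U G" and NU: "N \<subseteq> U"
    and g: "g \<in> carrier G"
  shows "perm_char (G Mod N) ((\<lambda>u. N #> u) ` U) (N #> g) = perm_char G U g"
proof -
  interpret NN: normal N G by fact
  have Qg: "group (G Mod N)" by (rule NN.factorgroup_is_group)
  have Ns: "subgroup N G" using N normal_imp_subgroup by blast
  have NG: "N \<subseteq> carrier G" using Ns subgroup.subset by blast
  let ?I = "(\<lambda>u. N #> u) ` U"
  have "carrier (G Mod N) \<subseteq> Pow (carrier G)" using rcosets_subset_PowG[OF Ns] by (simp add: FactGroup_def)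
  then have finQ: "finite (carrier (G Mod N))" using fin by (meson finite_Pow_iff finite_subset)
  have Xc: "N #> g \<in> carrier (G Mod N)" using g unfolding FactGroup_def RCOSETS_def by auto
  have A: "card ?I * perm_char (G Mod N) ?I (N #> g) = cnt (G Mod N) (carrier (G Mod N)) (N #> g) ?I"
    using group.perm_char_cnt[OF Qg finQ img_subgroup[OF N U NU] Xc] .
  have B: "card U * perm_char G U g = cnt G (carrier G) g U"
    using perm_char_cnt[OF fin U g] .
  define F where "F C = (if inv\<^bsub>G Mod N\<^esub> C \<otimes>\<^bsub>G Mod N\<^esub> (N #> g) \<otimes>\<^bsub>G Mod N\<^esub> C \<in> ?I then 1 else (0::nat))" for C
  have "cnt G (carrier G) g U = (\<Sum>y\<in>carrier G. if inv y \<otimes> g \<otimes> y \<in> U then 1 else 0)"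
    unfolding cnt_def by (rule card_filter_sum[OF fin])
  also have "\<dots> = (\<Sum>y\<in>carrier G. F (N #> y))"
  proof (intro sum.cong refl)
    fix y assume y: "y \<in> carrier G"
    have "inv y \<otimes> g \<otimes> y \<in> carrier G" using y g by simp
    then show "(if inv y \<otimes> g \<otimes> y \<in> U then 1 else 0) = F (N #> y)"
      unfolding F_def using FactGroup_conj[OF N y g] rcos_mem_img[OF N U NU] by simp
  qed
  also have "\<dots> = card N * (\<Sum>C\<in>rcosets N. F C)" using sum_rcosets_img[OF fin N, of F] by simp
  also have "(\<Sum>C\<in>rcosets N. F C) = cnt (G Mod N) (carrier (G Mod N)) (N #> g) ?I"
    unfolding cnt_def F_def using card_filter_sum[OF finQ] by (simp add: FactGroup_def)
  finally have C: "cnt G (carrier G) g U = card N * cnt (G Mod N) (carrier (G Mod N)) (N #> g) ?I" .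
  have D: "card U = card N * card ?I" using card_img[OF fin N U NU] .
  have pos: "card N * card ?I > 0" using D U fin subgroup.subset subgroup.one_closed finite_subset
    by (metis card_gt_0_iff empty_iff)
  have "card N * card ?I * perm_char G U g = card N * card ?I * perm_char (G Mod N) ?I (N #> g)"
    using A B C D by (simp add: mult.assoc)
  then show ?thesis using pos by simp
qed

end


lemma rel_lin:
  assumes a: "is_relation G a" and b: "is_relation G b"
  shows "is_relation G (\<lambda>H. x * a H + y * b H)"
proof -
  let ?f = "\<lambda>H. x * a H + y * b H"
  have fa: "finite {H. a H \<noteq> 0}" and fb: "finite {H. b H \<noteq> 0}"
    using a b unfolding is_relation_def burnside_elem_def by blast+
  let ?A = "{H. a H \<noteq> 0} \<union> {H. b H \<noteq> 0}"
  have finA: "finite ?A" using fa fb by simp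
  have sub: "{H. ?f H \<noteq> 0} \<subseteq> ?A" by auto
  have be: "burnside_elem G ?f"
    using a b sub finA finite_subset unfolding is_relation_def burnside_elem_def by blast
  have z: "(\<Sum>H\<in>{H. ?f H \<noteq> 0}. ?f H * int (perm_char G H g)) = 0" if g: "g \<in> carrier G" for g
  proof -
    have "(\<Sum>H\<in>{H. ?f H \<noteq> 0}. ?f H * int (perm_char G H g)) = (\<Sum>H\<in>?A. ?f H * int (perm_char G H g))"
      by (rule sum.mono_neutral_left[OF finA sub]) auto
    also have "\<dots> = x * (\<Sum>H\<in>?A. a H * int (perm_char G H g)) + y * (\<Sum>H\<in>?A. b H * int (perm_char G H g))"
      by (simp add: sum.distrib sum_distrib_left algebra_simps)
    also have "(\<Sum>H\<in>?A. a H * int (perm_char G H g)) = (\<Sum>H\<in>{H. a H \<noteq> 0}. a H * int (perm_char G H g))"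
      by (rule sum.mono_neutral_right[OF finA]) auto
    also have "\<dots> = 0" using a g unfolding is_relation_def by blast
    also have "(\<Sum>H\<in>?A. b H * int (perm_char G H g)) = (\<Sum>H\<in>{H. b H \<noteq> 0}. b H * int (perm_char G H g))"
      by (rule sum.mono_neutral_right[OF finA]) auto
    also have "\<dots> = 0" using b g unfolding is_relation_def by blast
    finally show ?thesis by simp
  qed
  show ?thesis unfolding is_relation_def using be z by blast
qed

lemma rel_scale: "is_relation G a \<Longrightarrow> is_relation G (\<lambda>H. x * a H)"
  using rel_lin[of G a a x 0] by simp

lemma rel_diff: "is_relation G a \<Longrightarrow> is_relation G b \<Longrightarrow> is_relation G (\<lambda>H. a H - b H)"
  using rel_lin[of G a b 1 "-1"] by simp

lemma psi0_rel:
  fixes G :: "('a, 'b) monoid_scheme" (structure)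
  assumes grp: "group G" and fin: "finite (carrier G)" and N: "N \<lhd> G" and rel: "is_relation G c"
  shows "is_relation G (\<lambda>U. \<Sum>H\<in>{H. c H \<noteq> 0 \<and> H <#> N = U}. c H)"
proof -
  interpret group G by fact
  define psi where "psi U = (\<Sum>H\<in>{H. c H \<noteq> 0 \<and> H <#> N = U}. c H)" for U
  define S where "S = {H. c H \<noteq> 0}"
  have Ns: "subgroup N G" using N normal_imp_subgroup by blast
  have NG: "N \<subseteq> carrier G" using Ns subgroup.subset by blast
  have finN: "finite N" using fin NG finite_subset by blast
  have finS: "finite S" using rel unfolding S_def is_relation_def burnside_elem_def by blast
  have csub: "\<And>H. c H \<noteq> 0 \<Longrightarrow> subgroup H G" using rel unfolding is_relation_def burnside_elem_def by blast
  define P where "P = Pow (carrier G)"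
  have finP: "finite P" unfolding P_def using fin by simp
  have psi_ne: "\<exists>H. c H \<noteq> 0 \<and> U = H <#> N" if "psi U \<noteq> 0" for U
  proof (rule ccontr)
    assume "\<not> ?thesis"
    then have e: "{H. c H \<noteq> 0 \<and> H <#> N = U} = {}" by blast
    have "psi U = 0" unfolding psi_def e by simp
    then show False using that by blast
  qed
  have psisub: "subgroup U G" if "psi U \<noteq> 0" for U
    using psi_ne[OF that] setmult_normal_subgroup[OF N] csub by blast
  have suppP: "{U. psi U \<noteq> 0} \<subseteq> P" unfolding P_def using psisub subgroup.subset by blast
  have be: "burnside_elem G psi"
    unfolding burnside_elem_def using psisub suppP finP finite_subset by blast
  have z: "(\<Sum>U\<in>{U. psi U \<noteq> 0}. psi U * int (perm_char G U g)) = 0" if g: "g \<in> carrier G" for g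
  proof -
    have "real_of_int (\<Sum>U\<in>{U. psi U \<noteq> 0}. psi U * int (perm_char G U g))
        = (\<Sum>U\<in>P. real_of_int (psi U) / real (card U) * real (cnt G (carrier G) g U))"
      using char_real[OF grp fin, of psi P g] psisub finP suppP g by simp
    also have "\<dots> = (\<Sum>U\<in>P. \<Sum>H\<in>{H. H \<in> S \<and> H <#> N = U}. real_of_int (c H) / real (card (H <#> N)) * real (cnt G (carrier G) g (H <#> N)))"
    proof (intro sum.cong refl)
      fix U assume "U \<in> P"
      have "real_of_int (psi U) / real (card U) * real (cnt G (carrier G) g U)
          = (\<Sum>H\<in>{H. H \<in> S \<and> H <#> N = U}. real_of_int (c H) / real (card U) * real (cnt G (carrier G) g U))"
        unfolding psi_def S_def by (simp add: sum_divide_distrib sum_distrib_right)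
      also have "\<dots> = (\<Sum>H\<in>{H. H \<in> S \<and> H <#> N = U}. real_of_int (c H) / real (card (H <#> N)) * real (cnt G (carrier G) g (H <#> N)))"
        by (intro sum.cong refl) auto
      finally show "real_of_int (psi U) / real (card U) * real (cnt G (carrier G) g U) = \<dots>" .
    qed
    also have "\<dots> = (\<Sum>H\<in>S. real_of_int (c H) / real (card (H <#> N)) * real (cnt G (carrier G) g (H <#> N)))"
    proof (rule sum.group[OF finS finP])
      show "(\<lambda>H. H <#> N) ` S \<subseteq> P"
        unfolding P_def S_def using csub setmult_normal_subgroup[OF N] subgroup.subset by blast
    qed
    also have "\<dots> = (\<Sum>H\<in>S. real_of_int (c H) / (real (card H) * real (card N)) * (\<Sum>m\<in>N. real (cnt G (carrier G) (g \<otimes> m) H)))"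
    proof (intro sum.cong refl)
      fix H assume "H \<in> S"
      then have H: "subgroup H G" using csub S_def by blast
      have e1: "card (H <#> N) * card (H \<inter> N) = card H * card N" by (rule card_setmult[OF fin N H])
      have e2: "card (H \<inter> N) * cnt G (carrier G) g (H <#> N) = (\<Sum>m\<in>N. cnt G (carrier G) (g \<otimes> m) H)"
        by (rule cnt_setmult[OF fin N H g])
      have finH: "finite H" using fin subgroup.subset[OF H] finite_subset by blast
      have "\<one> \<in> H \<inter> N" using subgroup.one_closed[OF H] subgroup.one_closed[OF Ns] by blast
      then have b: "card (H \<inter> N) > 0" using finH by (simp add: card_gt_0_iff) blast
      have a: "card (H <#> N) > 0" using e1 b finH finN subgroup.one_closed[OF H] subgroup.one_closed[OF Ns]
        by (metis card_gt_0_iff empty_iff mult_is_0 neq0_conv)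
      have r1: "real (card (H <#> N)) * real (card (H \<inter> N)) = real (card H) * real (card N)"
        using e1 by (metis of_nat_mult)
      have r2: "real (card (H \<inter> N)) * real (cnt G (carrier G) g (H <#> N)) = (\<Sum>m\<in>N. real (cnt G (carrier G) (g \<otimes> m) H))"
        using e2 by (metis of_nat_mult of_nat_sum)
      show "real_of_int (c H) / real (card (H <#> N)) * real (cnt G (carrier G) g (H <#> N))
          = real_of_int (c H) / (real (card H) * real (card N)) * (\<Sum>m\<in>N. real (cnt G (carrier G) (g \<otimes> m) H))"
        unfolding r1[symmetric] r2[symmetric] using a b by (simp add: field_simps)
    qed
    also have "\<dots> = (\<Sum>m\<in>N. (\<Sum>H\<in>S. real_of_int (c H) / real (card H) * real (cnt G (carrier G) (g \<otimes> m) H))) / real (card N)"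
      by (subst sum.swap) (simp add: sum_distrib_left sum_divide_distrib field_simps)
    also have "\<dots> = 0"
    proof -
      have "(\<Sum>H\<in>S. real_of_int (c H) / real (card H) * real (cnt G (carrier G) (g \<otimes> m) H)) = 0" if m: "m \<in> N" for m
      proof -
        have gm: "g \<otimes> m \<in> carrier G" using g m NG by blast
        have "real_of_int (\<Sum>H\<in>{H. c H \<noteq> 0}. c H * int (perm_char G H (g \<otimes> m)))
            = (\<Sum>H\<in>S. real_of_int (c H) / real (card H) * real (cnt G (carrier G) (g \<otimes> m) H))"
          using char_real[OF grp fin, of c S "g \<otimes> m"] csub finS gm S_def by simp
        moreover have "(\<Sum>H\<in>{H. c H \<noteq> 0}. c H * int (perm_char G H (g \<otimes> m))) = 0"
          using rel gm unfolding is_relation_def by blast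
        ultimately show ?thesis by simp
      qed
      then show ?thesis by simp
    qed
    finally show ?thesis by (metis of_int_eq_0_iff)
  qed
  have "is_relation G psi" unfolding is_relation_def using be z by blast
  then show ?thesis unfolding psi_def[abs_def] .
qed

lemma quot_rel:
  fixes G :: "('a, 'b) monoid_scheme" (structure)
  assumes grp: "group G" and fin: "finite (carrier G)" and N: "N \<lhd> G" and rel: "is_relation G psi"
    and sup: "\<forall>U. psi U \<noteq> 0 \<longrightarrow> N \<subseteq> U"
  shows "is_relation (G Mod N) (quot_sum G N psi)"
proof -
  interpret group G by fact
  interpret NN: normal N G by fact
  let ?img = "\<lambda>U. (\<lambda>u. N #> u) ` U"
  define S where "S = {U. psi U \<noteq> 0}"
  have finS: "finite S" using rel unfolding S_def is_relation_def burnside_elem_def by blast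
  have psub: "\<And>U. psi U \<noteq> 0 \<Longrightarrow> subgroup U G" using rel unfolding is_relation_def burnside_elem_def by blast
  have qs: "quot_sum G N psi V = (\<Sum>U\<in>{U. U \<in> S \<and> ?img U = V}. psi U)" for V
    unfolding quot_sum_def S_def by simp
  have q_ne: "\<exists>U. psi U \<noteq> 0 \<and> ?img U = V" if "quot_sum G N psi V \<noteq> 0" for V
  proof (rule ccontr)
    assume "\<not> ?thesis"
    then have e: "{U. psi U \<noteq> 0 \<and> ?img U = V} = {}" by blast
    have "quot_sum G N psi V = 0" unfolding quot_sum_def e by simp
    then show False using that by blast
  qed
  have suppI: "{V. quot_sum G N psi V \<noteq> 0} \<subseteq> ?img ` S" using q_ne S_def by blast
  have finI: "finite (?img ` S)" using finS by simp
  have be: "burnside_elem (G Mod N) (quot_sum G N psi)"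
    unfolding burnside_elem_def
  proof (intro conjI allI impI)
    show "finite {V. quot_sum G N psi V \<noteq> 0}" using finite_subset[OF suppI finI] .
    fix V assume "quot_sum G N psi V \<noteq> 0"
    then obtain U where U: "psi U \<noteq> 0" "?img U = V" using q_ne by blast
    show "subgroup V (G Mod N)" using img_subgroup[OF N psub[OF U(1)]] sup U by blast
  qed
  have z: "(\<Sum>V\<in>{V. quot_sum G N psi V \<noteq> 0}. quot_sum G N psi V * int (perm_char (G Mod N) V Q)) = 0"
    if Q: "Q \<in> carrier (G Mod N)" for Q
  proof -
    obtain g where g: "g \<in> carrier G" "Q = N #> g" using Q unfolding FactGroup_def RCOSETS_def by auto
    have "(\<Sum>V\<in>{V. quot_sum G N psi V \<noteq> 0}. quot_sum G N psi V * int (perm_char (G Mod N) V Q))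
        = (\<Sum>V\<in>?img ` S. quot_sum G N psi V * int (perm_char (G Mod N) V Q))"
      by (rule sum.mono_neutral_left[OF finI suppI]) auto
    also have "\<dots> = (\<Sum>V\<in>?img ` S. \<Sum>U\<in>{U. U \<in> S \<and> ?img U = V}. psi U * int (perm_char (G Mod N) (?img U) Q))"
    proof (intro sum.cong refl)
      fix V assume "V \<in> ?img ` S"
      have "quot_sum G N psi V * int (perm_char (G Mod N) V Q) = (\<Sum>U\<in>{U. U \<in> S \<and> ?img U = V}. psi U * int (perm_char (G Mod N) V Q))"
        unfolding qs by (simp add: sum_distrib_right)
      also have "\<dots> = (\<Sum>U\<in>{U. U \<in> S \<and> ?img U = V}. psi U * int (perm_char (G Mod N) (?img U) Q))"
        by (intro sum.cong refl) auto
      finally show "quot_sum G N psi V * int (perm_char (G Mod N) V Q) = \<dots>" .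
    qed
    also have "\<dots> = (\<Sum>U\<in>S. psi U * int (perm_char (G Mod N) (?img U) Q))"
      by (rule sum.group[OF finS finI]) simp
    also have "\<dots> = (\<Sum>U\<in>S. psi U * int (perm_char G U g))"
    proof (intro sum.cong refl)
      fix U assume "U \<in> S"
      then have "subgroup U G" "N \<subseteq> U" using psub sup S_def by blast+
      then show "psi U * int (perm_char (G Mod N) (?img U) Q) = psi U * int (perm_char G U g)"
        using perm_char_quot[OF fin N _ _ g(1)] g(2) by simp
    qed
    also have "\<dots> = 0" using rel g(1) unfolding is_relation_def S_def by blast
    finally show ?thesis .
  qed
  show ?thesis unfolding is_relation_def using be z by blast
qed


lemma beq_combine:
  fixes G :: "('a, 'b) monoid_scheme" (structure)
  assumes grp: "group G" and fin: "finite (carrier G)"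
    and b: "burnside_eq G (\<lambda>H. x * (c H - p H)) c'"
  shows "burnside_eq G (\<lambda>H. x * c H) (\<lambda>H. c' H + x * p H)"
  unfolding burnside_eq_def
proof (intro allI impI)
  interpret group G by fact
  fix H assume H: "subgroup H G"
  let ?Cl = "{L. conjugate_subgroups G L H}"
  have finCl: "finite ?Cl" using conj_class_finite[OF fin] .
  have b0: "(\<Sum>K\<in>{K. x * (c K - p K) \<noteq> 0 \<and> conjugate_subgroups G K H}. x * (c K - p K))
      = (\<Sum>K\<in>{K. c' K \<noteq> 0 \<and> conjugate_subgroups G K H}. c' K)"
    using b H unfolding burnside_eq_def by blast
  have b': "(\<Sum>L\<in>?Cl. x * (c L - p L)) = (\<Sum>L\<in>?Cl. c' L)"
    using b0 sum_supp_eq[OF finCl, of "\<lambda>K. x * (c K - p K)"] sum_supp_eq[OF finCl, of c'] by simp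
  have "(\<Sum>K\<in>{K. x * c K \<noteq> 0 \<and> conjugate_subgroups G K H}. x * c K) = (\<Sum>L\<in>?Cl. x * c L)"
    using sum_supp_eq[OF finCl] .
  also have "\<dots> = (\<Sum>L\<in>?Cl. x * (c L - p L) + x * p L)"
    by (intro sum.cong refl) (simp add: algebra_simps)
  also have "\<dots> = (\<Sum>L\<in>?Cl. x * (c L - p L)) + (\<Sum>L\<in>?Cl. x * p L)"
    by (rule sum.distrib)
  also have "\<dots> = (\<Sum>L\<in>?Cl. c' L) + (\<Sum>L\<in>?Cl. x * p L)" by (simp only: b')
  also have "\<dots> = (\<Sum>L\<in>?Cl. c' L + x * p L)" by (rule sum.distrib[symmetric])
  also have "\<dots> = (\<Sum>K\<in>{K. c' K + x * p K \<noteq> 0 \<and> conjugate_subgroups G K H}. c' K + x * p K)"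
    using sum_supp_eq[OF finCl, of "\<lambda>L. c' L + x * p L"] by simp
  finally show "(\<Sum>K\<in>{K. x * c K \<noteq> 0 \<and> conjugate_subgroups G K H}. x * c K)
      = (\<Sum>K\<in>{K. c' K + x * p K \<noteq> 0 \<and> conjugate_subgroups G K H}. c' K + x * p K)" .
qed

lemma main_aux:
  fixes G :: "('a, 'b) monoid_scheme" (structure) and D :: "'a set" and n :: nat
  assumes "group G" and "finite (carrier G)" and "D \<lhd> G"
    and "conj_action_factors G D n"
  shows "(\<forall>c. is_relation G c \<and> (\<forall>H. c H \<noteq> 0 \<longrightarrow> H \<subseteq> D) \<longrightarrow>
            (\<exists>c'. is_relation (G\<lparr>carrier := D\<rparr>) c' \<and>
                  burnside_eq G (\<lambda>H. int n * c H) c'))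
       \<and> (\<forall>N. N \<lhd> G \<and> N \<subseteq> D \<and> (\<forall>H. subgroup H G \<longrightarrow> N \<subseteq> H \<or> H \<subseteq> D) \<longrightarrow>
            (\<forall>c. is_relation G c \<longrightarrow>
               (\<exists>c' psi. is_relation (G\<lparr>carrier := D\<rparr>) c' \<and> is_relation G c' \<and>
                  is_relation G psi \<and> (\<forall>U. psi U \<noteq> 0 \<longrightarrow> N \<subseteq> U) \<and>
                  is_relation (G Mod N) (quot_sum G N psi) \<and>
                  burnside_eq G (\<lambda>H. int n * c H) (\<lambda>H. c' H + psi H))))"
proof -
  note grp = assms(1) and fin = assms(2) and D = assms(3)
  interpret group G by fact
  obtain K where K: "K \<lhd> G" and nK: "order (G Mod K) = n"
    and triv: "\<forall>k\<in>K. \<forall>H. subgroup H (G\<lparr>carrier := D\<rparr>) \<longrightarrow>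
        conjugate_subgroups (G\<lparr>carrier := D\<rparr>) (conj_sub G k H) H"
    using assms(4) unfolding conj_action_factors_def by blast
  have n: "n = card (rcosets K)" using nK unfolding order_def FactGroup_def by simp
  have Dsub: "subgroup D G" using D normal_imp_subgroup by blast
  have P1: "\<exists>c'. is_relation (G\<lparr>carrier := D\<rparr>) c' \<and> burnside_eq G (\<lambda>H. int n * c H) c'"
    if "is_relation G c" "\<forall>H. c H \<noteq> 0 \<longrightarrow> H \<subseteq> D" for c
    using part1[OF grp fin D K triv that] n by simp
  show ?thesis
  proof (intro conjI allI impI)
    fix c assume "is_relation G c \<and> (\<forall>H. c H \<noteq> 0 \<longrightarrow> H \<subseteq> D)"
    then show "\<exists>c'. is_relation (G\<lparr>carrier := D\<rparr>) c' \<and> burnside_eq G (\<lambda>H. int n * c H) c'"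
      using P1 by blast
  next
    fix N c
    assume hN: "N \<lhd> G \<and> N \<subseteq> D \<and> (\<forall>H. subgroup H G \<longrightarrow> N \<subseteq> H \<or> H \<subseteq> D)"
      and rel: "is_relation G c"
    then have N: "N \<lhd> G" and ND: "N \<subseteq> D" and dich: "\<And>H. subgroup H G \<Longrightarrow> N \<subseteq> H \<or> H \<subseteq> D" by blast+
    have Ns: "subgroup N G" using N normal_imp_subgroup by blast
    have csub: "\<And>H. c H \<noteq> 0 \<Longrightarrow> subgroup H G" using rel unfolding is_relation_def burnside_elem_def by blast
    define p where "p U = (\<Sum>H\<in>{H. c H \<noteq> 0 \<and> H <#> N = U}. c H)" for U
    have prel: "is_relation G p" using psi0_rel[OF grp fin N rel] unfolding p_def[abs_def] .
    have psub: "\<And>U. p U \<noteq> 0 \<Longrightarrow> subgroup U G" using prel unfolding is_relation_def burnside_elem_def by blast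
    have p_ne: "\<exists>H. c H \<noteq> 0 \<and> U = H <#> N" if "p U \<noteq> 0" for U
    proof (rule ccontr)
      assume "\<not> ?thesis"
      then have e: "{H. c H \<noteq> 0 \<and> H <#> N = U} = {}" by blast
      have "p U = 0" unfolding p_def e by simp
      then show False using that by blast
    qed
    have pN: "N \<subseteq> U" if "p U \<noteq> 0" for U
      using p_ne[OF that] setmult_contains_N[OF N] csub by blast
    define c1 where "c1 H = c H - p H" for H
    have c1rel: "is_relation G c1" using rel_diff[OF rel prel] unfolding c1_def[abs_def] .
    have c1D: "H \<subseteq> D" if ne: "c1 H \<noteq> 0" for H
    proof -
      have "c H \<noteq> 0 \<or> p H \<noteq> 0" using ne unfolding c1_def by auto
      then have Hs: "subgroup H G" using csub psub by blast
      show ?thesis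
      proof (rule ccontr)
        assume nD: "\<not> H \<subseteq> D"
        then have NH: "N \<subseteq> H" using dich[OF Hs] by blast
        have "{H'. c H' \<noteq> 0 \<and> H' <#> N = H} = {H'. c H' \<noteq> 0 \<and> H' = H}"
        proof (intro Collect_cong iffI conjI)
          fix H' assume a: "c H' \<noteq> 0 \<and> H' <#> N = H"
          have H's: "subgroup H' G" using a csub by blast
          have e2: "H' <#> N = H" using a by blast
          show "c H' \<noteq> 0" using a by blast
          show "H' = H"
          proof (cases "N \<subseteq> H'")
            case True
            have e1: "H' <#> N = H'" by (rule setmult_absorb[OF N H's True])
            show ?thesis by (subst e1[symmetric]) (rule e2)
          next
            case False
            then have HD: "H' \<subseteq> D" using dich[OF H's] by blast
            have "H' <#> N \<subseteq> D <#> D" by (rule mono_set_mult[OF HD ND])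
            then have "H \<subseteq> D" using e2 subgroup_mult_id[OF Dsub] by simp
            then show ?thesis using nD by blast
          qed
        next
          fix H' assume "c H' \<noteq> 0 \<and> H' = H"
          then show "c H' \<noteq> 0" "H' <#> N = H" using setmult_absorb[OF N Hs NH] by auto
        qed
        then have "p H = (\<Sum>H'\<in>{H'. c H' \<noteq> 0 \<and> H' = H}. c H')" unfolding p_def by simp
        also have "\<dots> = c H"
        proof (cases "c H = 0")
          case True
          then have "{H'. c H' \<noteq> 0 \<and> H' = H} = {}" by auto
          then show ?thesis using True by simp
        next
          case False
          then have "{H'. c H' \<noteq> 0 \<and> H' = H} = {H}" by auto
          then show ?thesis by simp
        qed
        finally show False using ne unfolding c1_def by simp
      qed
    qed
    obtain c' where c'rel: "is_relation (G\<lparr>carrier := D\<rparr>) c'" and c'eq: "burnside_eq G (\<lambda>H. int n * c1 H) c'"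
      using P1[OF c1rel] c1D by blast
    have c'G: "is_relation G c'" using ind_rel[OF grp fin D c'rel] .
    define psi where "psi H = int n * p H" for H
    have psirel: "is_relation G psi" using rel_scale[OF prel, of "int n"] unfolding psi_def[abs_def] .
    have psiN: "\<forall>U. psi U \<noteq> 0 \<longrightarrow> N \<subseteq> U" using pN unfolding psi_def by auto
    have qrel: "is_relation (G Mod N) (quot_sum G N psi)" using quot_rel[OF grp fin N psirel psiN] .
    have beq: "burnside_eq G (\<lambda>H. int n * c H) (\<lambda>H. c' H + psi H)"
      using beq_combine[OF grp fin, of "int n" c p c'] c'eq unfolding c1_def psi_def by simp
    show "\<exists>c' psi. is_relation (G\<lparr>carrier := D\<rparr>) c' \<and> is_relation G c' \<and>
                  is_relation G psi \<and> (\<forall>U. psi U \<noteq> 0 \<longrightarrow> N \<subseteq> U) \<and>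
                  is_relation (G Mod N) (quot_sum G N psi) \<and>
                  burnside_eq G (\<lambda>H. int n * c H) (\<lambda>H. c' H + psi H)"
      using c'rel c'G psirel psiN qrel beq by blast
  qed
qed

theorem lemma2p5:
  fixes G :: "('a, 'b) monoid_scheme" and D :: "'a set" and n :: nat
  assumes "group G" and "finite (carrier G)" and "D \<lhd> G"
    and "conj_action_factors G D n"
  shows "(\<forall>c. is_relation G c \<and> (\<forall>H. c H \<noteq> 0 \<longrightarrow> H \<subseteq> D) \<longrightarrow>
            (\<exists>c'. is_relation (G\<lparr>carrier := D\<rparr>) c' \<and>
                  burnside_eq G (\<lambda>H. int n * c H) c'))
       \<and> (\<forall>N. N \<lhd> G \<and> N \<subseteq> D \<and> (\<forall>H. subgroup H G \<longrightarrow> N \<subseteq> H \<or> H \<subseteq> D) \<longrightarrow>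
            (\<forall>c. is_relation G c \<longrightarrow>
               (\<exists>c' psi. is_relation (G\<lparr>carrier := D\<rparr>) c' \<and> is_relation G c' \<and>
                  is_relation G psi \<and> (\<forall>U. psi U \<noteq> 0 \<longrightarrow> N \<subseteq> U) \<and>
                  is_relation (G Mod N) (quot_sum G N psi) \<and>
                  burnside_eq G (\<lambda>H. int n * c H) (\<lambda>H. c' H + psi H))))"
  using main_aux[OF assms] .

end
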